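(* Let $\Pi$ be a class of subsets of $[K]$ such that for every $k\in[K]$ there exist $A,B\in\Pi$ with $k\in A$ and $k\notin B$. Let $A\in\Pi$, $i\in A$, $j\notin A$. Suppose that for every $k\in[K]$ there are positive numbers $I_k,J_k$ with $$\mathrm P_k^1\Big(\limsup_{n\to\infty}\tfrac{\lambda_k(n)}{n}\le I_k\Big)=1,\qquad \mathrm P_k^0\Big(\limsup_{n\to\infty}\tfrac{-\lambda_k(n)}{n}\le J_k\Big)=1.$$ Then, as $\alpha,\beta\to0$, $$\mathcal L_{i,A}(\alpha,\beta,\Pi)\gtrsim\frac{|\log\alpha|}{\min\{I_{A,C}:C\in\Pi,\ i\notin C\}},\qquad \mathcal L_{j,A}(\alpha,\beta,\Pi)\gtrsim\frac{|\log\beta|}{\min\{I_{A,C}:C\in\Pi,\ j\in C\}},$$ where $I_{A,C}=\sum_{k\in A\setminus C}I_k+\sum_{k\in C\setminus A}J_k$.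
   Context: Let $K\ge1$, $[K]=\{1,\dots,K\}$, $\mathbb N=\{1,2,\dots\}$. There are $K$ independent data streams $X_k=\{X_k(n):n\in\mathbb N\}$; $\mathcal F_k(n)=\sigma(X_k(t):t\le n)$, $\mathcal F(n)=\sigma(\mathcal F_k(n):k\in[K])$. For each $k$, $\mathrm P_k^0,\mathrm P_k^1$ are distributions of $X_k$ mutually absolutely continuous on each $\mathcal F_k(n)$, and $\lambda_k(n)=\log\frac{d\mathrm P_k^1}{d\mathrm P_k^0}(\mathcal F_k(n))$. For $A\subseteq[K]$, $\mathrm P_A$ is the joint law with independent streams, $X_k\sim\mathrm P_k^1$ if $k\in A$ and $X_k\sim\mathrm P_k^0$ otherwise; $\mathrm E_A$ its expectation. A sequential multiple testing procedure $\chi=(\mathbf T,\mathbf D)$: each $T_k$ is an $\mathbb N$-valued stopping time w.r.t. $\{\mathcal F(n)\}$, each $D_k$ an $\mathcal F(T_k)$-measurable Bernoulli variable ($D_k=1$ means stream $k$ declared a signal). $\mathrm{FWE}^1_A(\chi)=\mathrm P_A(\exists j\notin A:D_j=1)$, $\mathrm{FWE}^2_A(\chi)=\mathrm P_A(\exists i\in A:D_i=0)$ (defined for procedures with $\mathrm P_A(T_k<\infty)=1$ for all $k$). $\Delta(\alpha,\beta,\Pi)$ is the set of procedures with $\mathrm{FWE}^1_A(\chi)\le\alpha$ and $\mathrm{FWE}^2_A(\chi)\le\beta$ for all $A\in\Pi$, and $\mathcal L_{k,A}(\alpha,\beta,\Pi)=\inf\{\mathrm E_A[T_k]:(\mathbf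 T,\mathbf D)\in\Delta(\alpha,\beta,\Pi)\}$. $x\gtrsim y$ means $\liminf x/y\ge1$. *)

theory Defs
  imports "HOL-Probability.Probability"
begin

text \<open>Streams are indexed by k in {1..K}; time by n in {1..} (the paper's N = {1,2,...}). A joint outcome is omega :: nat => nat => 'x, with omega k n = X_k(n).\<close>

definition seqsp :: "'x measure \<Rightarrow> (nat \<Rightarrow> 'x) measure" where
  "seqsp S = PiM {1..} (\<lambda>_. S)"

definition joint_space :: "nat \<Rightarrow> (nat \<Rightarrow> 'x measure) \<Rightarrow> (nat \<Rightarrow> nat \<Rightarrow> 'x) measure" where
  "joint_space K S = PiM {1..K} (\<lambda>k. seqsp (S k))"

text \<open>Law of (X(1),...,X(n)) under P, i.e. P restricted to F_k(n).\<close>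
definition marg :: "(nat \<Rightarrow> 'x) measure \<Rightarrow> 'x measure \<Rightarrow> nat \<Rightarrow> (nat \<Rightarrow> 'x) measure" where
  "marg P S n = distr P (PiM {1..n} (\<lambda>_. S)) (\<lambda>x. restrict x {1..n})"

definition llr :: "(nat \<Rightarrow> 'x) measure \<Rightarrow> (nat \<Rightarrow> 'x) measure \<Rightarrow> 'x measure \<Rightarrow> nat \<Rightarrow> (nat \<Rightarrow> 'x) \<Rightarrow> real" where
  "llr P0 P1 S n x = ln (enn2real (RN_deriv (marg P0 S n) (marg P1 S n) (restrict x {1..n})))"

definition joint_law :: "nat \<Rightarrow> (nat \<Rightarrow> (nat \<Rightarrow> 'x) measure) \<Rightarrow> (nat \<Rightarrow> (nat \<Rightarrow> 'x) measure)
    \<Rightarrow> nat set \<Rightarrow> (nat \<Rightarrow> nat \<Rightarrow> 'x) measure" where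
  "joint_law K P0 P1 A = PiM {1..K} (\<lambda>k. if k \<in> A then P1 k else P0 k)"

text \<open>F(n) = sigma(X_k(t) : t <= n, k in [K]).\<close>
definition filt :: "nat \<Rightarrow> (nat \<Rightarrow> 'x measure) \<Rightarrow> nat \<Rightarrow> (nat \<Rightarrow> nat \<Rightarrow> 'x) measure" where
  "filt K S n = vimage_algebra (space (joint_space K S))
     (\<lambda>\<omega>. \<lambda>k\<in>{1..K}. restrict (\<omega> k) {1..n}) (PiM {1..K} (\<lambda>k. PiM {1..n} (\<lambda>_. S k)))"

text \<open>Sequential multiple testing procedure (T, D): T k an {1,2,...} \<union> {\<infinity>}-valued stopping time
  w.r.t. F, D k an F(T k)-measurable Bernoulli variable (True = signal).\<close>
definition is_procedure :: "nat \<Rightarrow> (nat \<Rightarrow> 'x measure) \<Rightarrow> (nat \<Rightarrow> (nat \<Rightarrow> nat \<Rightarrow> 'x) \<Rightarrow> enat)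
    \<Rightarrow> (nat \<Rightarrow> (nat \<Rightarrow> nat \<Rightarrow> 'x) \<Rightarrow> bool) \<Rightarrow> bool" where
  "is_procedure K S T D \<longleftrightarrow> (\<forall>k\<in>{1..K}.
      (\<forall>\<omega>\<in>space (joint_space K S). 1 \<le> T k \<omega>) \<and>
      (\<forall>n. {\<omega>\<in>space (joint_space K S). T k \<omega> \<le> enat n} \<in> sets (filt K S n)) \<and>
      {\<omega>\<in>space (joint_space K S). D k \<omega>} \<in> sets (joint_space K S) \<and>
      (\<forall>n. {\<omega>\<in>space (joint_space K S). D k \<omega> \<and> T k \<omega> \<le> enat n} \<in> sets (filt K S n)))"

definition FWE1 :: "nat \<Rightarrow> (nat \<Rightarrow> (nat \<Rightarrow> 'x) measure) \<Rightarrow> (nat \<Rightarrow> (nat \<Rightarrow> 'x) measure)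
    \<Rightarrow> nat set \<Rightarrow> (nat \<Rightarrow> (nat \<Rightarrow> nat \<Rightarrow> 'x) \<Rightarrow> bool) \<Rightarrow> real" where
  "FWE1 K P0 P1 A D = measure (joint_law K P0 P1 A)
     {\<omega>\<in>space (joint_law K P0 P1 A). \<exists>j\<in>{1..K} - A. D j \<omega>}"

definition FWE2 :: "nat \<Rightarrow> (nat \<Rightarrow> (nat \<Rightarrow> 'x) measure) \<Rightarrow> (nat \<Rightarrow> (nat \<Rightarrow> 'x) measure)
    \<Rightarrow> nat set \<Rightarrow> (nat \<Rightarrow> (nat \<Rightarrow> nat \<Rightarrow> 'x) \<Rightarrow> bool) \<Rightarrow> real" where
  "FWE2 K P0 P1 A D = measure (joint_law K P0 P1 A)
     {\<omega>\<in>space (joint_law K P0 P1 A). \<exists>i\<in>A. \<not> D i \<omega>}"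

text \<open>Delta(alpha, beta, Pi); the FWEs are only defined when all T k are P_A-a.s. finite.\<close>
definition Delta :: "nat \<Rightarrow> (nat \<Rightarrow> 'x measure) \<Rightarrow> (nat \<Rightarrow> (nat \<Rightarrow> 'x) measure) \<Rightarrow> (nat \<Rightarrow> (nat \<Rightarrow> 'x) measure)
    \<Rightarrow> real \<Rightarrow> real \<Rightarrow> nat set set
    \<Rightarrow> ((nat \<Rightarrow> (nat \<Rightarrow> nat \<Rightarrow> 'x) \<Rightarrow> enat) \<times> (nat \<Rightarrow> (nat \<Rightarrow> nat \<Rightarrow> 'x) \<Rightarrow> bool)) set" where
  "Delta K S P0 P1 \<alpha> \<beta> Cls = {(T, D). is_procedure K S T D \<and>
     (\<forall>A\<in>Cls. (\<forall>k\<in>{1..K}. AE \<omega> in joint_law K P0 P1 A. T k \<omega> < \<infinity>) \<and>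
        FWE1 K P0 P1 A D \<le> \<alpha> \<and> FWE2 K P0 P1 A D \<le> \<beta>)}"

definition LL :: "nat \<Rightarrow> (nat \<Rightarrow> 'x measure) \<Rightarrow> (nat \<Rightarrow> (nat \<Rightarrow> 'x) measure) \<Rightarrow> (nat \<Rightarrow> (nat \<Rightarrow> 'x) measure)
    \<Rightarrow> nat \<Rightarrow> nat set \<Rightarrow> real \<Rightarrow> real \<Rightarrow> nat set set \<Rightarrow> ennreal" where
  "LL K S P0 P1 k A \<alpha> \<beta> Cls = (INF TD\<in>Delta K S P0 P1 \<alpha> \<beta> Cls.
      \<integral>\<^sup>+ \<omega>. ennreal_of_enat (fst TD k \<omega>) \<partial>(joint_law K P0 P1 A))"

definition IAC :: "(nat \<Rightarrow> real) \<Rightarrow> (nat \<Rightarrow> real) \<Rightarrow> nat set \<Rightarrow> nat set \<Rightarrow> real" where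
  "IAC I J A C = (\<Sum>k\<in>A - C. I k) + (\<Sum>k\<in>C - A. J k)"

end

theory Submission
  imports Defs
begin

lemma tailB:
  fixes PA :: "'a measure" and L :: "nat \<Rightarrow> 'a \<Rightarrow> real" and I :: real
  assumes PA: "prob_space PA" and Ipos: "0 < I"
    and Lbor[measurable]: "\<And>n. L n \<in> borel_measurable PA"
    and rate: "AE \<omega> in PA. \<forall>\<eta>>0. \<exists>n0. \<forall>n\<ge>n0. L n \<omega> \<le> (I+\<eta>) * real n"
    and th: "0 < \<theta>" and rho: "1 < \<rho>"
  shows "\<exists>N0. \<forall>t\<ge>N0. \<exists>S. S \<in> sets PA \<and> measure PA S \<le> \<theta> \<and>
     {\<omega>\<in>space PA. \<exists>n. 1 \<le> n \<and> real n \<le> t \<and> \<rho>*I*t \<le> L n \<omega>} \<subseteq> S"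
proof -
  interpret prob_space PA by fact
  define G where "G m = {\<omega>\<in>space PA. \<exists>n\<ge>m. \<rho>*I*real n \<le> L n \<omega>}" for m
  have Gs: "G m \<in> sets PA" for m
    unfolding G_def by measurable
  have Gdec: "decseq G"
    unfolding decseq_def G_def by (auto intro: le_trans)
  have "(\<lambda>m. measure PA (G m)) \<longlonglongrightarrow> measure PA (\<Inter>m. G m)"
    by (rule finite_Lim_measure_decseq) (use Gs Gdec in auto)
  moreover have "measure PA (\<Inter>m. G m) = 0"
  proof -
    have "AE \<omega> in PA. \<omega> \<notin> (\<Inter>m. G m)"
      using rate
    proof eventually_elim
      case (elim \<omega>)
      define \<eta> where "\<eta> = (\<rho> - 1) * I / 2"
      have "\<eta> > 0" using rho Ipos by (simp add: \<eta>_def)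
      with elim obtain n0 where n0: "\<And>n. n \<ge> n0 \<Longrightarrow> L n \<omega> \<le> (I+\<eta>) * real n" by blast
      have "\<omega> \<notin> G (max n0 1)"
      proof
        assume "\<omega> \<in> G (max n0 1)"
        then obtain n where n: "n \<ge> max n0 1" "\<rho>*I*real n \<le> L n \<omega>" by (auto simp: G_def)
        have "(I+\<eta>) * real n < \<rho>*I*real n"
          using n(1) rho Ipos by (simp add: \<eta>_def field_simps)
        with n0[of n] n show False by auto
      qed
      then show ?case by blast
    qed
    then have "(\<Inter>m. G m) \<in> null_sets PA"
      using Gs by (subst AE_iff_null_sets) auto
    then show ?thesis by (simp add: measure_def null_setsD1)
  qed
  ultimately have "(\<lambda>m. measure PA (G m)) \<longlonglongrightarrow> 0" by simp
  then obtain m where m: "measure PA (G m) < \<theta>/2"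
    using th by (metis (no_types, lifting) LIMSEQ_D abs_of_nonneg diff_zero half_gt_zero
        measure_nonneg order_refl real_norm_def)
  define H where "H k = {\<omega>\<in>space PA. \<exists>n<m. real k \<le> L n \<omega>}" for k :: nat
  have Hs: "H k \<in> sets PA" for k
    unfolding H_def by measurable
  have Hdec: "decseq H"
    unfolding decseq_def H_def by (auto intro: order_trans)
  have "(\<lambda>k. measure PA (H k)) \<longlonglongrightarrow> measure PA (\<Inter>k. H k)"
    by (rule finite_Lim_measure_decseq) (use Hs Hdec in auto)
  moreover have "(\<Inter>k. H k) = {}"
  proof (rule ccontr)
    assume "(\<Inter>k. H k) \<noteq> {}"
    then obtain \<omega> where w: "\<And>k. \<omega> \<in> H k" by blast
    define B where "B = (\<Sum>n<m. \<bar>L n \<omega>\<bar>)"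
    obtain k :: nat where k: "B < real k" using reals_Archimedean2 by blast
    from w[of k] obtain n where n: "n < m" "real k \<le> L n \<omega>" by (auto simp: H_def)
    have "\<bar>L n \<omega>\<bar> \<le> B" unfolding B_def
      using n(1) by (intro member_le_sum) auto
    with n k show False by auto
  qed
  ultimately have "(\<lambda>k. measure PA (H k)) \<longlonglongrightarrow> 0" by simp
  then obtain k where k: "measure PA (H k) < \<theta>/2"
    using th by (metis (no_types, lifting) LIMSEQ_D abs_of_nonneg diff_zero half_gt_zero
        measure_nonneg order_refl real_norm_def)
  show ?thesis
  proof (rule exI[of _ "real k / (\<rho>*I)"], intro allI impI)
    fix t assume t: "real k / (\<rho>*I) \<le> t"
    have kt: "real k \<le> \<rho>*I*t"
      using t rho Ipos by (simp add: field_simps)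
    show "\<exists>S. S \<in> sets PA \<and> measure PA S \<le> \<theta> \<and>
     {\<omega>\<in>space PA. \<exists>n. 1 \<le> n \<and> real n \<le> t \<and> \<rho>*I*t \<le> L n \<omega>} \<subseteq> S"
    proof (intro exI conjI)
      show "G m \<union> H k \<in> sets PA" using Gs Hs by auto
      show "measure PA (G m \<union> H k) \<le> \<theta>"
        using measure_subadditive[of "G m" PA "H k"] Gs Hs m k by simp
      show "{\<omega>\<in>space PA. \<exists>n. 1 \<le> n \<and> real n \<le> t \<and> \<rho>*I*t \<le> L n \<omega>} \<subseteq> G m \<union> H k"
      proof
        fix \<omega> assume "\<omega> \<in> {\<omega>\<in>space PA. \<exists>n. 1 \<le> n \<and> real n \<le> t \<and> \<rho>*I*t \<le> L n \<omega>}"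
        then obtain n where w: "\<omega> \<in> space PA" "1 \<le> n" "real n \<le> t" "\<rho>*I*t \<le> L n \<omega>" by auto
        show "\<omega> \<in> G m \<union> H k"
        proof (cases "n < m")
          case True
          then have "\<omega> \<in> H k" using w kt by (auto simp: H_def)
          then show ?thesis by blast
        next
          case False
          have "\<rho>*I*real n \<le> \<rho>*I*t"
            using w rho Ipos by (intro mult_left_mono) auto
          then show ?thesis using False w by (auto simp: G_def intro!: exI[of _ n])
        qed
      qed
    qed
  qed
qed

lemma core:
  fixes PA PC :: "'a measure" and L :: "nat \<Rightarrow> 'a \<Rightarrow> real" and I :: real
    and F :: "nat \<Rightarrow> 'a measure"
  assumes PA: "prob_space PA" and PC: "prob_space PC" and sets_eq: "sets PC = sets PA"
    and Ipos: "0 < I"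
    and Lbor[measurable]: "\<And>n. L n \<in> borel_measurable PA"
    and rate: "AE \<omega> in PA. \<forall>\<eta>>0. \<exists>n0. \<forall>n\<ge>n0. L n \<omega> \<le> (I+\<eta>) * real n"
    and Fsp: "\<And>n. space (F n) = space PA" and Fsub: "\<And>n. sets (F n) \<subseteq> sets PA"
    and LF: "\<And>n c. {\<omega>\<in>space PA. L n \<omega> < c} \<in> sets (F n)"
    and chg: "\<And>n c G. G \<in> sets (F n) \<Longrightarrow> (\<forall>\<omega>\<in>G. L n \<omega> < c) \<Longrightarrow>
                measure PA G \<le> exp c * measure PC G"
    and eps: "0 < \<epsilon>"
  shows "\<exists>\<delta>>0. \<forall>a b T E. 0 < a \<and> a < \<delta> \<and> 0 < b \<and> b < \<delta> \<and>
     (\<forall>\<omega>\<in>space PA. 1 \<le> T \<omega>) \<and>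
     (\<forall>n. {\<omega>\<in>space PA. T \<omega> = enat n} \<in> sets (F n)) \<and>
     (\<forall>n. {\<omega>\<in>space PA. E \<omega> \<and> T \<omega> = enat n} \<in> sets (F n)) \<and>
     {\<omega>\<in>space PA. E \<omega>} \<in> sets PA \<and>
     measure PA {\<omega>\<in>space PA. \<not> E \<omega>} \<le> a \<and> measure PC {\<omega>\<in>space PC. E \<omega>} \<le> b \<longrightarrow>
     ennreal ((1 - \<epsilon>) * \<bar>ln b\<bar> / I) \<le> (\<integral>\<^sup>+\<omega>. ennreal_of_enat (T \<omega>) \<partial>PA)"
proof (cases "\<epsilon> < 1")
  case False
  show ?thesis
  proof (intro exI[of _ 1] conjI allI impI)
    fix a b :: real and T :: "'a \<Rightarrow> enat" and E
    have "(1 - \<epsilon>) * \<bar>ln b\<bar> / I \<le> 0"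
      using False Ipos by (intro divide_nonpos_pos mult_nonpos_nonneg) auto
    then show "ennreal ((1 - \<epsilon>) * \<bar>ln b\<bar> / I) \<le> (\<integral>\<^sup>+\<omega>. ennreal_of_enat (T \<omega>) \<partial>PA)"
      by (simp add: ennreal_neg)
  qed simp
next
  case True
  interpret A: prob_space PA by fact
  interpret C: prob_space PC by fact
  have spC: "space PC = space PA" using sets_eq by (rule sets_eq_imp_space_eq)
  define q where "q = 1 - \<epsilon>/2"
  define \<rho> where "\<rho> = (1 - \<epsilon>/4) / q"
  have q: "0 < q" "q < 1" using eps True by (auto simp: q_def)
  have rho: "1 < \<rho>" using eps True by (auto simp: \<rho>_def q_def field_simps)
  have th: "0 < \<epsilon>/6" using eps by simp
  obtain N0 where N0: "\<And>t. t \<ge> N0 \<Longrightarrow> \<exists>S. S \<in> sets PA \<and> measure PA S \<le> \<epsilon>/6 \<and>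
     {\<omega>\<in>space PA. \<exists>n. 1 \<le> n \<and> real n \<le> t \<and> \<rho>*I*t \<le> L n \<omega>} \<subseteq> S"
    using tailB[OF PA Ipos Lbor rate th rho] by blast
  define \<delta> where "\<delta> = min (\<epsilon>/6) (min ((\<epsilon>/6) powr (4/\<epsilon>)) (exp (- max N0 0 * I / q)))"
  have dpos: "0 < \<delta>" using eps by (simp add: \<delta>_def)
  show ?thesis
  proof (intro exI[of _ \<delta>] conjI allI impI dpos)
    fix a b :: real and T :: "'a \<Rightarrow> enat" and E
    assume H: "0 < a \<and> a < \<delta> \<and> 0 < b \<and> b < \<delta> \<and>
     (\<forall>\<omega>\<in>space PA. 1 \<le> T \<omega>) \<and>
     (\<forall>n. {\<omega>\<in>space PA. T \<omega> = enat n} \<in> sets (F n)) \<and>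
     (\<forall>n. {\<omega>\<in>space PA. E \<omega> \<and> T \<omega> = enat n} \<in> sets (F n)) \<and>
     {\<omega>\<in>space PA. E \<omega>} \<in> sets PA \<and>
     measure PA {\<omega>\<in>space PA. \<not> E \<omega>} \<le> a \<and> measure PC {\<omega>\<in>space PC. E \<omega>} \<le> b"
    then have a: "0 < a" "a < \<epsilon>/6" and b: "0 < b" "b < (\<epsilon>/6) powr (4/\<epsilon>)" "b < exp (- max N0 0 * I / q)"
      and T1: "\<And>\<omega>. \<omega> \<in> space PA \<Longrightarrow> 1 \<le> T \<omega>"
      and TF: "\<And>n. {\<omega>\<in>space PA. T \<omega> = enat n} \<in> sets (F n)"
      and ETF: "\<And>n. {\<omega>\<in>space PA. E \<omega> \<and> T \<omega> = enat n} \<in> sets (F n)"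
      and Es: "{\<omega>\<in>space PA. E \<omega>} \<in> sets PA"
      and PnE: "measure PA {\<omega>\<in>space PA. \<not> E \<omega>} \<le> a"
      and PCE: "measure PC {\<omega>\<in>space PC. E \<omega>} \<le> b"
      unfolding \<delta>_def by (simp_all only: min_less_iff_conj)
    define Lb where "Lb = - ln b"
    have b1: "b < 1"
      using b(2) eps True
    proof -
      have "(\<epsilon>/6) powr (4/\<epsilon>) < 1"
        using powr_less_mono2[of "4/\<epsilon>" "\<epsilon>/6" 1] eps True by simp
      then show ?thesis using b(2) by linarith
    qed
    have Lb: "0 < Lb" using b b1 by (simp add: Lb_def)
    have absln: "\<bar>ln b\<bar> = Lb" using Lb by (simp add: Lb_def)
    define N where "N = q * Lb / I"
    have Npos: "0 < N" using q Lb Ipos by (simp add: N_def)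
    have NN0: "N \<ge> N0"
    proof -
      have "ln b < - max N0 0 * I / q"
        using b by (metis exp_less_cancel_iff exp_ln)
      then have "max N0 0 * I / q < Lb" by (simp add: Lb_def)
      then have "max N0 0 * I < Lb * q" using q by (simp add: pos_divide_less_eq)
      then have "max N0 0 < Lb * q / I" using pos_less_divide_eq[OF Ipos] by blast
      then have "max N0 0 < N" by (simp add: N_def mult.commute)
      then show ?thesis by simp
    qed
    define c where "c = \<rho> * I * N"
    have c_eq: "c = (1 - \<epsilon>/4) * Lb" using q Ipos by (simp add: c_def \<rho>_def N_def)
    obtain S where S: "S \<in> sets PA" "measure PA S \<le> \<epsilon>/6"
      "{\<omega>\<in>space PA. \<exists>n. 1 \<le> n \<and> real n \<le> N \<and> \<rho>*I*N \<le> L n \<omega>} \<subseteq> S"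
      using N0[OF NN0] by blast
    define nN where "nN = nat \<lfloor>N\<rfloor>"
    define \<Gamma> where "\<Gamma> n = {\<omega>\<in>space PA. E \<omega> \<and> T \<omega> = enat n} \<inter> {\<omega>\<in>space PA. L n \<omega> < c}" for n
    have \<Gamma>F: "\<Gamma> n \<in> sets (F n)" for n
      unfolding \<Gamma>_def using ETF LF by (rule sets.Int)
    have \<Gamma>s: "\<Gamma> n \<in> sets PA" for n using \<Gamma>F Fsub by blast
    have \<Gamma>sC: "\<Gamma> n \<in> sets PC" for n using \<Gamma>s sets_eq by simp
    define U where "U = (\<Union>n\<in>{1..nN}. \<Gamma> n)"
    have Us: "U \<in> sets PA" unfolding U_def using \<Gamma>s by auto
    have nEs: "{\<omega>\<in>space PA. \<not> E \<omega>} \<in> sets PA"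
    proof -
      have "{\<omega>\<in>space PA. \<not> E \<omega>} = space PA - {\<omega>\<in>space PA. E \<omega>}" by auto
      then show ?thesis using Es by auto
    qed
    have nNr: "real nN \<le> N"
    proof -
      have "real nN = of_int \<lfloor>N\<rfloor>" using Npos by (simp add: nN_def)
      then show ?thesis by linarith
    qed
    have nNr2: "N < real nN + 1"
    proof -
      have "real nN = of_int \<lfloor>N\<rfloor>" using Npos by (simp add: nN_def)
      then show ?thesis by linarith
    qed
    have cover: "{\<omega>\<in>space PA. T \<omega> \<le> enat nN} \<subseteq> {\<omega>\<in>space PA. \<not> E \<omega>} \<union> S \<union> U"
    proof
      fix \<omega> assume w: "\<omega> \<in> {\<omega>\<in>space PA. T \<omega> \<le> enat nN}"
      then have ws: "\<omega> \<in> space PA" and Tle: "T \<omega> \<le> enat nN" by auto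
      obtain m where m: "T \<omega> = enat m" using Tle by (cases "T \<omega>") auto
      have m1: "1 \<le> m" using T1[OF ws] m by (simp add: one_enat_def)
      have mN: "m \<le> nN" using Tle m by simp
      have mNr: "real m \<le> N" using mN nNr by linarith
      show "\<omega> \<in> {\<omega>\<in>space PA. \<not> E \<omega>} \<union> S \<union> U"
      proof (cases "E \<omega>")
        case False then show ?thesis using ws by auto
      next
        case Ew: True
        show ?thesis
        proof (cases "L m \<omega> < c")
          case True
          then have "\<omega> \<in> \<Gamma> m" using ws Ew m by (simp add: \<Gamma>_def)
          then have "\<omega> \<in> U" using m1 mN by (auto simp: U_def)
          then show ?thesis by auto
        next
          case False
          have "\<omega> \<in> {\<omega>\<in>space PA. \<exists>n. 1 \<le> n \<and> real n \<le> N \<and> \<rho>*I*N \<le> L n \<omega>}"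
            using ws m1 mNr False by (auto simp: c_def not_less)
          then have "\<omega> \<in> S" using S(3) by blast
          then show ?thesis by auto
        qed
      qed
    qed
    have EsC: "{\<omega>\<in>space PC. E \<omega>} \<in> sets PC" using Es spC sets_eq by simp
    have PU: "measure PA U \<le> exp c * b"
    proof -
      have "measure PA U \<le> (\<Sum>n\<in>{1..nN}. measure PA (\<Gamma> n))"
        unfolding U_def by (rule A.finite_measure_subadditive_finite) (use \<Gamma>s in auto)
      also have "\<dots> \<le> (\<Sum>n\<in>{1..nN}. exp c * measure PC (\<Gamma> n))"
        by (intro sum_mono chg[OF \<Gamma>F]) (auto simp: \<Gamma>_def)
      also have "\<dots> = exp c * measure PC U"
        unfolding U_def
        by (subst C.finite_measure_finite_Union)
           (auto simp: sum_distrib_left disjoint_family_on_def \<Gamma>_def \<Gamma>sC[unfolded \<Gamma>_def])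
      also have "\<dots> \<le> exp c * b"
      proof (intro mult_left_mono)
        have "U \<subseteq> {\<omega>\<in>space PC. E \<omega>}" using spC by (auto simp: U_def \<Gamma>_def)
        then have "measure PC U \<le> measure PC {\<omega>\<in>space PC. E \<omega>}"
          by (rule C.finite_measure_mono) (rule EsC)
        then show "measure PC U \<le> b" using PCE by linarith
      qed simp
      finally show ?thesis .
    qed
    have ecb: "exp c * b < \<epsilon>/6"
    proof -
      have "exp c * b = exp (c + ln b)" using b by (simp add: exp_add)
      also have "c + ln b = (\<epsilon>/4) * ln b" using c_eq by (simp add: Lb_def algebra_simps)
      also have "exp ((\<epsilon>/4) * ln b) = b powr (\<epsilon>/4)" using b by (simp add: powr_def mult.commute)
      also have "\<dots> < ((\<epsilon>/6) powr (4/\<epsilon>)) powr (\<epsilon>/4)"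
        by (rule powr_less_mono2) (use eps b in auto)
      also have "\<dots> = \<epsilon>/6" using eps by (simp add: powr_powr)
      finally show ?thesis .
    qed
    have les: "{\<omega>\<in>space PA. T \<omega> \<le> enat nN} \<in> sets PA"
    proof -
      have "{\<omega>\<in>space PA. T \<omega> \<le> enat nN} = (\<Union>m\<in>{..nN}. {\<omega>\<in>space PA. T \<omega> = enat m})"
        by (auto simp: enat_ile) (metis atMost_iff enat_ile enat_ord_simps(1))
      moreover have "{\<omega>\<in>space PA. T \<omega> = enat m} \<in> sets PA" for m using TF Fsub by blast
      ultimately show ?thesis by auto
    qed
    have Ple: "measure PA {\<omega>\<in>space PA. T \<omega> \<le> enat nN} \<le> \<epsilon>/2"
    proof -
      have "measure PA {\<omega>\<in>space PA. T \<omega> \<le> enat nN} \<le> measure PA ({\<omega>\<in>space PA. \<not> E \<omega>} \<union> S \<union> U)"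
        by (rule A.finite_measure_mono[OF cover]) (use nEs S Us in auto)
      also have "\<dots> \<le> measure PA ({\<omega>\<in>space PA. \<not> E \<omega>} \<union> S) + measure PA U"
        by (rule measure_subadditive) (use nEs S Us in auto)
      also have "\<dots> \<le> measure PA {\<omega>\<in>space PA. \<not> E \<omega>} + measure PA S + measure PA U"
        using measure_subadditive[of "{\<omega>\<in>space PA. \<not> E \<omega>}" PA S] nEs S by simp
      finally show ?thesis using PnE a S(2) PU ecb by linarith
    qed
    define Gt where "Gt = space PA - {\<omega>\<in>space PA. T \<omega> \<le> enat nN}"
    have Gts: "Gt \<in> sets PA" using les by (auto simp: Gt_def)
    have PGt: "measure PA Gt \<ge> 1 - \<epsilon>/2"
      using A.prob_compl[OF les] Ple by (simp add: Gt_def)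
    have "(\<integral>\<^sup>+\<omega>. ennreal N * indicator Gt \<omega> \<partial>PA) \<le> (\<integral>\<^sup>+\<omega>. ennreal_of_enat (T \<omega>) \<partial>PA)"
    proof (intro nn_integral_mono)
      fix \<omega> assume ws: "\<omega> \<in> space PA"
      show "ennreal N * indicator Gt \<omega> \<le> ennreal_of_enat (T \<omega>)"
      proof (cases "\<omega> \<in> Gt")
        case False then show ?thesis by simp
      next
        case True
        then have gt: "\<not> T \<omega> \<le> enat nN" by (auto simp: Gt_def)
        show ?thesis
        proof (cases "T \<omega>")
          case (enat m)
          then have "nN < m" using gt by simp
          then have "N \<le> real m" using nNr2 by linarith
          then show ?thesis using True enat by (simp add: ennreal_of_nat_eq_real_of_nat)
        next
          case infinity
          then show ?thesis by simp
        qed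
      qed
    qed
    moreover have "(\<integral>\<^sup>+\<omega>. ennreal N * indicator Gt \<omega> \<partial>PA) = ennreal (N * measure PA Gt)"
      using Gts Npos by (simp add: nn_integral_cmult_indicator A.emeasure_eq_measure ennreal_mult)
    moreover have "(1 - \<epsilon>) * \<bar>ln b\<bar> / I \<le> N * measure PA Gt"
    proof -
      have "(1 - \<epsilon>) * \<bar>ln b\<bar> / I = (1 - \<epsilon>) * (Lb / I)" by (simp add: absln)
      also have "\<dots> \<le> (q * q) * (Lb / I)"
        using Lb Ipos by (intro mult_right_mono) (auto simp: q_def power2_eq_square algebra_simps)
      also have "\<dots> = N * q" by (simp add: N_def)
      also have "\<dots> \<le> N * measure PA Gt"
        using PGt Npos by (intro mult_left_mono) (auto simp: q_def)
      finally show ?thesis .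
    qed
    ultimately show "ennreal ((1 - \<epsilon>) * \<bar>ln b\<bar> / I) \<le> (\<integral>\<^sup>+\<omega>. ennreal_of_enat (T \<omega>) \<partial>PA)"
      by (metis ennreal_leI order_trans)
  qed
qed

lemma PiM_density_prob:
  fixes M :: "'i \<Rightarrow> 'a measure"
  assumes fin: "finite I" and M: "\<And>i. i\<in>I \<Longrightarrow> prob_space (M i)"
    and Ng: "\<And>i. i\<in>I \<Longrightarrow> prob_space (density (M i) (g i))"
    and g: "\<And>i. i\<in>I \<Longrightarrow> g i \<in> borel_measurable (M i)"
  shows "PiM I (\<lambda>i. density (M i) (g i)) = density (PiM I M) (\<lambda>x. \<Prod>i\<in>I. g i (x i))"
proof -
  define M' where "M' i = (if i\<in>I then M i else count_space {undefined})" for i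
  define N' where "N' i = (if i\<in>I then density (M i) (g i) else count_space {undefined})" for i
  have pc: "prob_space (count_space {undefined::'a})" by (auto intro!: prob_spaceI)
  have pM': "prob_space (M' i)" for i using M pc by (auto simp: M'_def)
  have pN': "prob_space (N' i)" for i using Ng pc by (auto simp: N'_def)
  interpret M': product_prob_space M' by (intro product_prob_spaceI pM')
  interpret N': product_prob_space N' by (intro product_prob_spaceI pN')
  have eq1: "PiM I (\<lambda>i. density (M i) (g i)) = PiM I N'" by (rule PiM_cong) (auto simp: N'_def)
  have eq2: "PiM I M = PiM I M'" by (rule PiM_cong) (auto simp: M'_def)
  have gm: "g i \<in> borel_measurable (M' i)" if "i \<in> I" for i using g that by (simp add: M'_def)
  have setsN': "sets (N' i) = sets (M' i)" if "i \<in> I" for i using that by (simp add: N'_def M'_def)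
  have "density (PiM I M') (\<lambda>x. \<Prod>i\<in>I. g i (x i)) = PiM I N'"
  proof (rule N'.PiM_eqI[OF fin])
    show "sets (density (PiM I M') (\<lambda>x. \<Prod>i\<in>I. g i (x i))) = sets (PiM I N')"
      by (simp add: setsN' cong: sets_PiM_cong)
  next
    fix A assume A: "\<And>i. i \<in> I \<Longrightarrow> A i \<in> sets (N' i)"
    have A': "A i \<in> sets (M' i)" if "i \<in> I" for i using A[OF that] setsN'[OF that] by simp
    have PiEs: "PiE I A \<in> sets (PiM I M')" using A' fin by (intro sets_PiM_I_finite) auto
    have meas: "(\<lambda>x. \<Prod>i\<in>I. g i (x i)) \<in> borel_measurable (PiM I M')"
      using gm by (intro borel_measurable_prod_ennreal) (auto intro: measurable_compose[OF measurable_component_singleton])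
    have "emeasure (density (PiM I M') (\<lambda>x. \<Prod>i\<in>I. g i (x i))) (PiE I A)
        = (\<integral>\<^sup>+x. (\<Prod>i\<in>I. g i (x i)) * indicator (PiE I A) x \<partial>PiM I M')"
      by (rule emeasure_density[OF meas PiEs])
    also have "\<dots> = (\<integral>\<^sup>+x. (\<Prod>i\<in>I. g i (x i) * indicator (A i) (x i)) \<partial>PiM I M')"
    proof (rule nn_integral_cong)
      fix x assume x: "x \<in> space (PiM I M')"
      then have ext: "x \<in> extensional I" by (auto simp: space_PiM PiE_def)
      have "(\<Prod>i\<in>I. indicator (A i) (x i) :: ennreal) = indicator (PiE I A) x"
      proof (cases "\<forall>i\<in>I. x i \<in> A i")
        case True then show ?thesis using ext by (auto simp: PiE_def Pi_def)
      next
        case False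
        then obtain i where "i \<in> I" "x i \<notin> A i" by blast
        then have "(\<Prod>i\<in>I. indicator (A i) (x i) :: ennreal) = 0"
          using fin by (intro prod_zero) (auto intro!: bexI[of _ i])
        moreover have "x \<notin> PiE I A" using \<open>i \<in> I\<close> \<open>x i \<notin> A i\<close> by (auto simp: PiE_def)
        ultimately show ?thesis by simp
      qed
      then show "(\<Prod>i\<in>I. g i (x i)) * indicator (PiE I A) x = (\<Prod>i\<in>I. g i (x i) * indicator (A i) (x i))"
        by (simp add: prod.distrib)
    qed
    also have "\<dots> = (\<Prod>i\<in>I. \<integral>\<^sup>+y. g i y * indicator (A i) y \<partial>M' i)"
      using gm A' by (intro M'.product_nn_integral_prod fin) auto
    also have "\<dots> = (\<Prod>i\<in>I. emeasure (N' i) (A i))"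
    proof (rule prod.cong[OF refl])
      fix i assume i: "i \<in> I"
      show "(\<integral>\<^sup>+y. g i y * indicator (A i) y \<partial>M' i) = emeasure (N' i) (A i)"
        using i gm[OF i] A'[OF i] by (simp add: N'_def M'_def emeasure_density)
    qed
    finally show "emeasure (density (PiM I M') (\<lambda>x. \<Prod>i\<in>I. g i (x i))) (PiE I A) = (\<Prod>i\<in>I. emeasure (N' i) (A i))" .
  qed
  then show ?thesis using eq1 eq2 by simp
qed

lemma distr_PiM_fin_gen:
  assumes fin: "finite I" and M: "\<And>i. i\<in>I \<Longrightarrow> prob_space (M i)"
    and f: "\<And>i. i\<in>I \<Longrightarrow> f \<in> measurable (M i) (M' i)"
  shows "distr (PiM I M) (PiM I M') (compose I f) = PiM I (\<lambda>i. distr (M i) (M' i) f)"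
proof -
  define M2 where "M2 i = (if i\<in>I then M i else count_space {undefined})" for i
  define N where "N i = (if i\<in>I then distr (M i) (M' i) f else count_space {undefined})" for i
  have pc: "prob_space (count_space {undefined::'z})" for u :: 'z by (auto intro!: prob_spaceI)
  have pM2: "prob_space (M2 i)" for i using M pc by (auto simp: M2_def)
  have pN: "prob_space (N i)" for i using M pc f by (auto simp: N_def intro: prob_space.prob_space_distr)
  interpret M2: product_prob_space M2 by (intro product_prob_spaceI pM2)
  interpret N: product_prob_space N by (intro product_prob_spaceI pN)
  have eqM: "PiM I M = PiM I M2" by (rule PiM_cong) (auto simp: M2_def)
  have fm: "i \<in> I \<Longrightarrow> f \<in> measurable (M2 i) (M' i)" for i using f by (simp add: M2_def)
  have "distr (PiM I M2) (PiM I M') (compose I f) = PiM I N"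
  proof (rule N.PiM_eqI)
    have N_events_eq: "sets (Pi\<^sub>M I N) = sets (Pi\<^sub>M I M')"
      unfolding N_def by (intro sets_PiM_cong) auto
    also have "\<dots> = sets (distr (Pi\<^sub>M I M2) (Pi\<^sub>M I M') (compose I f))"
      by simp
    finally show "sets (distr (Pi\<^sub>M I M2) (Pi\<^sub>M I M') (compose I f)) = sets (Pi\<^sub>M I N)"  ..
    fix A assume A: "\<And>i. i \<in> I \<Longrightarrow> A i \<in> sets (N i)"
    have "emeasure (distr (Pi\<^sub>M I M2) (Pi\<^sub>M I M') (compose I f)) (Pi\<^sub>E I A) =
          emeasure (Pi\<^sub>M I M2) (compose I f -` Pi\<^sub>E I A \<inter> space (Pi\<^sub>M I M2))"
    proof (intro emeasure_distr)
      show "compose I f \<in> Pi\<^sub>M I M2 \<rightarrow>\<^sub>M Pi\<^sub>M I M'"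
        unfolding compose_def
      proof (rule measurable_restrict)
        fix i assume i: "i \<in> I"
        show "(\<lambda>x. f (x i)) \<in> Pi\<^sub>M I M2 \<rightarrow>\<^sub>M M' i"
          by (rule measurable_compose[OF measurable_component_singleton[OF i, of M2] fm[OF i]])
      qed
      show "Pi\<^sub>E I A \<in> sets (Pi\<^sub>M I M')"
        unfolding N_events_eq [symmetric] by (intro sets_PiM_I_finite fin A)
    qed
    also have "compose I f -` Pi\<^sub>E I A \<inter> space (Pi\<^sub>M I M2) = Pi\<^sub>E I (\<lambda>i. f -` A i \<inter> space (M2 i))"
      using A by (auto simp: space_PiM PiE_def Pi_def extensional_def N_def compose_def)
    also have "emeasure (Pi\<^sub>M I M2) (Pi\<^sub>E I (\<lambda>i. f -` A i \<inter> space (M2 i))) =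
          (\<Prod>i\<in>I. emeasure (M2 i) (f -` A i \<inter> space (M2 i)))"
      using A fm by (intro M2.emeasure_PiM fin) (auto simp: N_def)
    also have "\<dots> = (\<Prod>i\<in>I. emeasure (distr (M2 i) (M' i) f) (A i))"
      using A fm by (intro prod.cong emeasure_distr [symmetric]) (auto simp: N_def)
    also have "\<dots> = (\<Prod>i\<in>I. emeasure (N i) (A i))"
      unfolding N_def by (intro prod.cong) (auto simp: M2_def)
    finally show "emeasure (distr (Pi\<^sub>M I M2) (Pi\<^sub>M I M') (compose I f)) (Pi\<^sub>E I A) = \<dots>" .
  qed fact
  also have "PiM I N = PiM I (\<lambda>i. distr (M i) (M' i) f)"
    by (intro PiM_cong) (auto simp: N_def)
  finally show ?thesis using eqM by simp
qed

lemma DL: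
  fixes x :: "nat \<Rightarrow> nat \<Rightarrow> real" and b :: "nat \<Rightarrow> real" and KS :: "nat set"
  assumes fin: "finite KS"
    and ls: "\<And>k. k \<in> KS \<Longrightarrow> limsup (\<lambda>n. ereal (x k n / real n)) \<le> ereal (b k)"
  shows "\<forall>\<eta>>0. \<exists>n0. \<forall>n\<ge>n0. (\<Sum>k\<in>KS. x k n) \<le> ((\<Sum>k\<in>KS. b k) + \<eta>) * real n"
proof (intro allI impI)
  fix \<eta> :: real assume eta: "0 < \<eta>"
  define \<eta>' where "\<eta>' = \<eta> / (real (card KS) + 1)"
  have eta': "0 < \<eta>'" using eta by (simp add: \<eta>'_def add_pos_nonneg)
  have ev: "eventually (\<lambda>n. x k n / real n < b k + \<eta>') sequentially" if k: "k \<in> KS" for k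
  proof -
    have "limsup (\<lambda>n. ereal (x k n / real n)) < ereal (b k + \<eta>')"
      by (rule le_less_trans[OF ls[OF k]]) (use eta' in simp)
    from Limsup_lessD[OF this] show ?thesis by simp
  qed
  have "eventually (\<lambda>n. \<forall>k\<in>KS. x k n / real n < b k + \<eta>') sequentially"
    by (rule eventually_ball_finite[OF fin]) (use ev in blast)
  then have "eventually (\<lambda>n. (\<forall>k\<in>KS. x k n / real n < b k + \<eta>') \<and> 0 < n) sequentially"
    using eventually_gt_at_top[of "0::nat"] by (rule eventually_conj)
  then obtain n0 where n0: "\<And>n. n \<ge> n0 \<Longrightarrow> (\<forall>k\<in>KS. x k n / real n < b k + \<eta>') \<and> 0 < n"
    by (auto simp: eventually_sequentially)
  show "\<exists>n0. \<forall>n\<ge>n0. (\<Sum>k\<in>KS. x k n) \<le> ((\<Sum>k\<in>KS. b k) + \<eta>) * real n"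
  proof (intro exI allI impI)
    fix n assume n: "n0 \<le> n"
    have npos: "0 < real n" using n0[OF n] by simp
    have "x k n \<le> (b k + \<eta>') * real n" if "k \<in> KS" for k
      using n0[OF n] that npos by (auto simp: pos_divide_less_eq less_imp_le)
    then have "(\<Sum>k\<in>KS. x k n) \<le> (\<Sum>k\<in>KS. (b k + \<eta>') * real n)" by (rule sum_mono)
    also have "\<dots> = ((\<Sum>k\<in>KS. b k) + real (card KS) * \<eta>') * real n"
      by (simp add: sum.distrib sum_distrib_right sum_distrib_left algebra_simps)
    also have "\<dots> \<le> ((\<Sum>k\<in>KS. b k) + \<eta>) * real n"
    proof (intro mult_right_mono)
      have "real (card KS) * \<eta>' = \<eta> * (real (card KS) / (real (card KS) + 1))"
        by (simp add: \<eta>'_def)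
      also have "\<dots> \<le> \<eta> * 1"
        using eta by (intro mult_left_mono) auto
      finally have "real (card KS) * \<eta>' \<le> \<eta>" by simp
      then show "(\<Sum>k\<in>KS. b k) + real (card KS) * \<eta>' \<le> (\<Sum>k\<in>KS. b k) + \<eta>" by simp
    qed (use npos in simp)
    finally show "(\<Sum>k\<in>KS. x k n) \<le> ((\<Sum>k\<in>KS. b k) + \<eta>) * real n" .
  qed
qed

locale setting =
  fixes K :: nat and S :: "nat \<Rightarrow> 'x measure" and P0 P1 :: "nat \<Rightarrow> (nat \<Rightarrow> 'x) measure"
  assumes laws: "\<And>k. k \<in> {1..K} \<Longrightarrow> prob_space (P0 k) \<and> prob_space (P1 k) \<and>
                  sets (P0 k) = sets (seqsp (S k)) \<and> sets (P1 k) = sets (seqsp (S k))"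
    and mac: "\<And>k n. k \<in> {1..K} \<Longrightarrow>
                  absolutely_continuous (marg (P0 k) (S k) n) (marg (P1 k) (S k) n) \<and>
                  absolutely_continuous (marg (P1 k) (S k) n) (marg (P0 k) (S k) n)"
begin

definition "fmap n \<omega> = (\<lambda>k\<in>{1..K}. restrict (\<omega> k) {1..n})"
definition "Yn n = PiM {1..K} (\<lambda>k. PiM {1..n} (\<lambda>_. S k))"
definition "m0 k n = marg (P0 k) (S k) n"
definition "m1 k n = marg (P1 k) (S k) n"
definition "RR k n = RN_deriv (m0 k n) (m1 k n)"

lemma sets_jl: "sets (joint_law K P0 P1 X) = sets (joint_space K S)"
  unfolding joint_law_def joint_space_def by (rule sets_PiM_cong) (auto simp: laws)

lemma space_jl: "space (joint_law K P0 P1 X) = space (joint_space K S)"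
  using sets_jl by (rule sets_eq_imp_space_eq)

lemma prob_jl: "prob_space (joint_law K P0 P1 X)"
  unfolding joint_law_def by (rule prob_space_PiM) (use laws in auto)

lemma restr_meas: "k \<in> {1..K} \<Longrightarrow> sets P = sets (seqsp (S k)) \<Longrightarrow>
   (\<lambda>x. restrict x {1..n}) \<in> measurable P (PiM {1..n} (\<lambda>_. S k))"
  unfolding seqsp_def
  by (subst measurable_cong_sets[OF _ refl], assumption) (rule measurable_restrict_subset, auto)

lemma fmap_meas: "fmap n \<in> measurable (joint_space K S) (Yn n)"
  unfolding fmap_def Yn_def joint_space_def
proof (rule measurable_restrict)
  fix k assume k: "k \<in> {1..K}"
  show "(\<lambda>\<omega>. restrict (\<omega> k) {1..n}) \<in> measurable (PiM {1..K} (\<lambda>k. seqsp (S k))) (PiM {1..n} (\<lambda>_. S k))"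
    by (rule measurable_compose[OF measurable_component_singleton[OF k, of "\<lambda>k. seqsp (S k)"] restr_meas[OF k refl]])
qed

lemma fmap_meas_jl: "fmap n \<in> measurable (joint_law K P0 P1 X) (Yn n)"
  using fmap_meas measurable_cong_sets[OF sets_jl refl] by blast

lemma m_facts:
  assumes k: "k \<in> {1..K}"
  shows "prob_space (m0 k n)" "prob_space (m1 k n)"
    "sets (m0 k n) = sets (PiM {1..n} (\<lambda>_. S k))" "sets (m1 k n) = sets (PiM {1..n} (\<lambda>_. S k))"
proof -
  show "prob_space (m0 k n)" unfolding m0_def marg_def
    using laws[OF k] restr_meas[OF k] by (intro prob_space.prob_space_distr) auto
  show "prob_space (m1 k n)" unfolding m1_def marg_def
    using laws[OF k] restr_meas[OF k] by (intro prob_space.prob_space_distr) auto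
qed (simp_all add: m0_def m1_def marg_def)

lemma distr_jl:
  "distr (joint_law K P0 P1 X) (Yn n) (fmap n) = PiM {1..K} (\<lambda>k. if k \<in> X then m1 k n else m0 k n)"
proof -
  have eq: "fmap n = compose {1..K} (\<lambda>x. restrict x {1..n})"
    by (rule ext) (simp add: fmap_def compose_def)
  have "distr (joint_law K P0 P1 X) (Yn n) (fmap n) =
     distr (PiM {1..K} (\<lambda>k. if k \<in> X then P1 k else P0 k)) (PiM {1..K} (\<lambda>k. PiM {1..n} (\<lambda>_. S k)))
       (compose {1..K} (\<lambda>x. restrict x {1..n}))"
    unfolding eq joint_law_def Yn_def ..
  also have "\<dots> = PiM {1..K} (\<lambda>k. distr (if k \<in> X then P1 k else P0 k) (PiM {1..n} (\<lambda>_. S k)) (\<lambda>x. restrict x {1..n}))"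
    by (rule distr_PiM_fin_gen) (use laws restr_meas in auto)
  also have "\<dots> = PiM {1..K} (\<lambda>k. if k \<in> X then m1 k n else m0 k n)"
    by (rule PiM_cong) (auto simp: m0_def m1_def marg_def)
  finally show ?thesis .
qed

lemma dens_RR: "k \<in> {1..K} \<Longrightarrow> density (m0 k n) (RR k n) = m1 k n"
proof -
  assume k: "k \<in> {1..K}"
  interpret prob_space "m0 k n" using m_facts[OF k] by simp
  show ?thesis unfolding RR_def
    by (rule density_RN_deriv) (use mac[OF k] m_facts[OF k] in \<open>auto simp: m0_def m1_def\<close>)
qed

lemma RR_pos_fin: "k \<in> {1..K} \<Longrightarrow> AE y in m0 k n. RR k n y \<noteq> \<infinity> \<and> RR k n y \<noteq> 0"
proof -
  assume k: "k \<in> {1..K}"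
  interpret prob_space "m0 k n" using m_facts[OF k] by simp
  interpret N: prob_space "m1 k n" using m_facts[OF k] by simp
  have fin: "AE y in m0 k n. RR k n y \<noteq> \<infinity>" unfolding RR_def
    by (rule RN_deriv_finite) (use mac[OF k] m_facts[OF k] N.sigma_finite_measure in \<open>auto simp: m0_def m1_def\<close>)
  define Z where "Z = {y\<in>space (m0 k n). RR k n y = 0}"
  have RRm[measurable]: "RR k n \<in> borel_measurable (m0 k n)" unfolding RR_def by simp
  have Zs: "Z \<in> sets (m0 k n)" unfolding Z_def by measurable
  have "emeasure (m1 k n) Z = (\<integral>\<^sup>+y. RR k n y * indicator Z y \<partial>m0 k n)"
    using dens_RR[OF k, of n] Zs by (metis emeasure_density RRm)
  also have "\<dots> = (\<integral>\<^sup>+y. 0 \<partial>m0 k n)"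
    by (rule nn_integral_cong) (auto simp: Z_def indicator_def)
  finally have "Z \<in> null_sets (m1 k n)"
    using Zs m_facts[OF k] by (auto simp: null_sets_def)
  then have "Z \<in> null_sets (m0 k n)"
    using mac[OF k, of n] by (auto simp: absolutely_continuous_def m0_def m1_def)
  then have "AE y in m0 k n. y \<notin> Z" using Zs by (simp add: AE_iff_null_sets)
  then have "AE y in m0 k n. RR k n y \<noteq> 0" by (auto simp: Z_def)
  with fin show ?thesis by auto
qed

definition "lamY A C n y = (\<Sum>k\<in>{1..K}. (if k \<in> A then ln (enn2real (RR k n (y k))) else 0)
                                   - (if k \<in> C then ln (enn2real (RR k n (y k))) else 0))"
definition "lam A C n \<omega> = (\<Sum>k\<in>{1..K}. (if k \<in> A then llr (P0 k) (P1 k) (S k) n (\<omega> k) else 0)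
                                   - (if k \<in> C then llr (P0 k) (P1 k) (S k) n (\<omega> k) else 0))"

lemma lam_eq: "lam A C n \<omega> = lamY A C n (fmap n \<omega>)"
  unfolding lam_def lamY_def by (intro sum.cong) (auto simp: fmap_def llr_def RR_def m0_def m1_def)

lemma RR_comp_meas:
  assumes k: "k \<in> {1..K}" shows "(\<lambda>y. RR k n (y k)) \<in> borel_measurable (Yn n)"
proof -
  have RRm: "RR k n \<in> borel_measurable (PiM {1..n} (\<lambda>_. S k))"
    using measurable_cong_sets[OF m_facts(3)[OF k] refl, of n borel] borel_measurable_RN_deriv[of "m0 k n" "m1 k n"]
    unfolding RR_def by blast
  show ?thesis unfolding Yn_def
    by (rule measurable_compose[OF measurable_component_singleton[OF k, of "\<lambda>k. PiM {1..n} (\<lambda>_. S k)"] RRm])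
qed

lemma lamY_meas: "lamY A C n \<in> borel_measurable (Yn n)"
  unfolding lamY_def
proof (rule borel_measurable_sum)
  fix k assume k: "k \<in> {1..K}"
  note RR_comp_meas[OF k, measurable]
  show "(\<lambda>y. (if k \<in> A then ln (enn2real (RR k n (y k))) else 0)
                                   - (if k \<in> C then ln (enn2real (RR k n (y k))) else 0)) \<in> borel_measurable (Yn n)"
    by measurable
qed

lemma lam_meas: "lam A C n \<in> borel_measurable (joint_law K P0 P1 X)"
proof -
  have "(\<lambda>\<omega>. lamY A C n (fmap n \<omega>)) \<in> borel_measurable (joint_law K P0 P1 X)"
    by (rule measurable_compose[OF fmap_meas_jl lamY_meas])
  then show ?thesis by (simp add: lam_eq[abs_def])
qed

lemma filt_eq: "filt K S n = vimage_algebra (space (joint_space K S)) (fmap n) (Yn n)"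
  by (simp add: filt_def fmap_def[abs_def] Yn_def)

lemma fmap_space: "fmap n \<in> space (joint_space K S) \<rightarrow> space (Yn n)"
  using measurable_space[OF fmap_meas] by blast

lemma filt_sets: "sets (filt K S n) = {fmap n -` H \<inter> space (joint_space K S) | H. H \<in> sets (Yn n)}"
  unfolding filt_eq by (rule sets_vimage_algebra2[OF fmap_space])

lemma filt_space: "space (filt K S n) = space (joint_space K S)"
  unfolding filt_eq by simp

lemma filt_sub: "sets (filt K S n) \<subseteq> sets (joint_space K S)"
  unfolding filt_sets using measurable_sets[OF fmap_meas] by blast

lemma filt_mono: "sets (filt K S n) \<subseteq> sets (filt K S (Suc n))"
proof
  fix G assume "G \<in> sets (filt K S n)"
  then obtain H where H: "H \<in> sets (Yn n)" and G: "G = fmap n -` H \<inter> space (joint_space K S)"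
    unfolding filt_sets by blast
  define r where "r y = (\<lambda>k\<in>{1..K}. restrict (y k) {1..n})" for y :: "nat \<Rightarrow> nat \<Rightarrow> 'x"
  have rm: "r \<in> measurable (Yn (Suc n)) (Yn n)"
    unfolding r_def Yn_def
  proof (rule measurable_restrict)
    fix k assume k: "k \<in> {1..K}"
    show "(\<lambda>y. restrict (y k) {1..n}) \<in> PiM {1..K} (\<lambda>k. PiM {1..Suc n} (\<lambda>_. S k)) \<rightarrow>\<^sub>M PiM {1..n} (\<lambda>_. S k)"
      by (rule measurable_compose[OF measurable_component_singleton[OF k, of "\<lambda>k. PiM {1..Suc n} (\<lambda>_. S k)"] measurable_restrict_subset]) auto
  qed
  have fr: "fmap n \<omega> = r (fmap (Suc n) \<omega>)" for \<omega>
    by (rule ext) (auto simp: r_def fmap_def)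
  have "G = fmap (Suc n) -` (r -` H \<inter> space (Yn (Suc n))) \<inter> space (joint_space K S)"
    using fmap_space[of "Suc n"] by (auto simp: G fr)
  moreover have "r -` H \<inter> space (Yn (Suc n)) \<in> sets (Yn (Suc n))"
    using measurable_sets[OF rm H] .
  ultimately show "G \<in> sets (filt K S (Suc n))"
    unfolding filt_sets by blast
qed

lemma lam_F: "{\<omega>\<in>space (joint_space K S). lam A C n \<omega> < c} \<in> sets (filt K S n)"
proof -
  have "{\<omega>\<in>space (joint_space K S). lam A C n \<omega> < c} =
      fmap n -` {y\<in>space (Yn n). lamY A C n y < c} \<inter> space (joint_space K S)"
    using fmap_space[of n] by (auto simp: lam_eq)
  moreover have "{y\<in>space (Yn n). lamY A C n y < c} \<in> sets (Yn n)"
    using lamY_meas by measurable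
  ultimately show ?thesis unfolding filt_sets by blast
qed

lemma repr:
  "PiM {1..K} (\<lambda>k. if k \<in> X then m1 k n else m0 k n) =
   density (PiM {1..K} (\<lambda>k. m0 k n)) (\<lambda>y. \<Prod>k\<in>{1..K}. (if k \<in> X then RR k n else (\<lambda>_. 1)) (y k))"
proof -
  have "PiM {1..K} (\<lambda>k. if k \<in> X then m1 k n else m0 k n) =
        PiM {1..K} (\<lambda>k. density (m0 k n) (if k \<in> X then RR k n else (\<lambda>_. 1)))"
    by (rule PiM_cong) (auto simp: dens_RR density_1)
  also have "\<dots> = density (PiM {1..K} (\<lambda>k. m0 k n)) (\<lambda>y. \<Prod>k\<in>{1..K}. (if k \<in> X then RR k n else (\<lambda>_. 1)) (y k))"
  proof (rule PiM_density_prob)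
    fix k assume k: "k \<in> {1..K}"
    show "prob_space (m0 k n)" using m_facts[OF k] by simp
    show "prob_space (density (m0 k n) (if k \<in> X then RR k n else (\<lambda>_. 1)))"
      using m_facts[OF k] by (auto simp: dens_RR[OF k] density_1)
    show "(if k \<in> X then RR k n else (\<lambda>_. 1)) \<in> borel_measurable (m0 k n)"
      by (auto simp: RR_def)
  qed simp
  finally show ?thesis .
qed

lemma chgY:
  assumes H: "H \<in> sets (Yn n)" and Hc: "\<forall>y\<in>H. lamY A C n y < c"
  shows "emeasure (PiM {1..K} (\<lambda>k. if k \<in> A then m1 k n else m0 k n)) H \<le>
         ennreal (exp c) * emeasure (PiM {1..K} (\<lambda>k. if k \<in> C then m1 k n else m0 k n)) H"
proof -
  define Q where "Q = PiM {1..K} (\<lambda>k. m0 k n)"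
  define f where "f X y = (\<Prod>k\<in>{1..K}. (if k \<in> X then RR k n else (\<lambda>_. 1)) (y k))" for X y
  have sQ: "sets Q = sets (Yn n)" unfolding Q_def Yn_def
    by (rule sets_PiM_cong) (auto simp: m_facts)
  have HQ: "H \<in> sets Q" using H sQ by simp
  have fm: "f X \<in> borel_measurable Q" for X
    unfolding f_def
  proof (rule borel_measurable_prod_ennreal)
    fix k assume k: "k \<in> {1..K}"
    have "(\<lambda>y. RR k n (y k)) \<in> borel_measurable Q"
      using RR_comp_meas[OF k] measurable_cong_sets[OF sQ refl] by blast
    then show "(\<lambda>y. (if k \<in> X then RR k n else (\<lambda>_. 1)) (y k)) \<in> borel_measurable Q"
      by (cases "k \<in> X") auto
  qed
  have AEQ: "AE y in Q. \<forall>k\<in>{1..K}. RR k n (y k) \<noteq> \<infinity> \<and> RR k n (y k) \<noteq> 0"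
  proof (rule AE_finite_allI)
    fix k assume k: "k \<in> {1..K}"
    show "AE y in Q. RR k n (y k) \<noteq> \<infinity> \<and> RR k n (y k) \<noteq> 0"
      unfolding Q_def
      by (rule AE_PiM_component[where P="\<lambda>x. RR k n x \<noteq> \<infinity> \<and> RR k n x \<noteq> 0"])
         (use m_facts RR_pos_fin[OF k] k in auto)
  qed simp
  have pw: "AE y in Q. f A y * indicator H y \<le> ennreal (exp c) * (f C y * indicator H y)"
    using AEQ
  proof eventually_elim
    case (elim y)
    show ?case
    proof (cases "y \<in> H")
      case False then show ?thesis by simp
    next
      case True
      define r where "r k = enn2real (RR k n (y k))" for k
      have rpos: "0 < r k" if "k \<in> {1..K}" for k
        using elim that by (auto simp: r_def enn2real_positive_iff less_top zero_less_iff_neq_zero)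
      have RRr: "RR k n (y k) = ennreal (r k)" if "k \<in> {1..K}" for k
        using elim that by (auto simp: r_def ennreal_enn2real_if)
      have fX: "f X y = ennreal (exp (\<Sum>k\<in>{1..K}. if k \<in> X then ln (r k) else 0))" for X
      proof -
        have "f X y = (\<Prod>k\<in>{1..K}. ennreal (if k \<in> X then r k else 1))"
          unfolding f_def by (intro prod.cong) (auto simp: RRr)
        also have "\<dots> = ennreal (\<Prod>k\<in>{1..K}. if k \<in> X then r k else 1)"
          by (rule prod_ennreal) (auto simp: rpos less_imp_le)
        also have "(\<Prod>k\<in>{1..K}. if k \<in> X then r k else 1) = (\<Prod>k\<in>{1..K}. exp (if k \<in> X then ln (r k) else 0))"
          by (intro prod.cong refl) (auto simp: rpos)
        also have "\<dots> = exp (\<Sum>k\<in>{1..K}. if k \<in> X then ln (r k) else 0)"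
          by (simp add: exp_sum)
        finally show ?thesis .
      qed
      have lY: "lamY A C n y = (\<Sum>k\<in>{1..K}. if k \<in> A then ln (r k) else 0) - (\<Sum>k\<in>{1..K}. if k \<in> C then ln (r k) else 0)"
        unfolding lamY_def r_def by (simp add: sum_subtractf)
      have "exp (\<Sum>k\<in>{1..K}. if k \<in> A then ln (r k) else 0) =
            exp (lamY A C n y) * exp (\<Sum>k\<in>{1..K}. if k \<in> C then ln (r k) else 0)"
        by (simp add: lY exp_diff)
      also have "\<dots> \<le> exp c * exp (\<Sum>k\<in>{1..K}. if k \<in> C then ln (r k) else 0)"
        using Hc True by (intro mult_right_mono) auto
      finally have "f A y \<le> ennreal (exp c) * f C y"
        by (simp add: fX ennreal_mult[symmetric] ennreal_leI)
      then show ?thesis using True by simp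
    qed
  qed
  have "emeasure (PiM {1..K} (\<lambda>k. if k \<in> A then m1 k n else m0 k n)) H = (\<integral>\<^sup>+y. f A y * indicator H y \<partial>Q)"
    unfolding repr by (fold Q_def f_def) (rule emeasure_density[OF fm HQ])
  also have "\<dots> \<le> (\<integral>\<^sup>+y. ennreal (exp c) * (f C y * indicator H y) \<partial>Q)"
    by (rule nn_integral_mono_AE[OF pw])
  also have "\<dots> = ennreal (exp c) * (\<integral>\<^sup>+y. f C y * indicator H y \<partial>Q)"
    by (rule nn_integral_cmult) (use fm HQ in measurable)
  also have "(\<integral>\<^sup>+y. f C y * indicator H y \<partial>Q) = emeasure (PiM {1..K} (\<lambda>k. if k \<in> C then m1 k n else m0 k n)) H"
    unfolding repr by (fold Q_def f_def) (rule emeasure_density[OF fm HQ, symmetric])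
  finally show ?thesis .
qed

lemma chg:
  assumes G: "G \<in> sets (filt K S n)" and Gc: "\<forall>\<omega>\<in>G. lam A C n \<omega> < c"
  shows "measure (joint_law K P0 P1 A) G \<le> exp c * measure (joint_law K P0 P1 C) G"
proof -
  obtain H0 where H0: "H0 \<in> sets (Yn n)" and G0: "G = fmap n -` H0 \<inter> space (joint_space K S)"
    using G unfolding filt_sets by blast
  define H where "H = H0 \<inter> {y\<in>space (Yn n). lamY A C n y < c}"
  have Hs: "H \<in> sets (Yn n)" unfolding H_def using H0 lamY_meas by measurable
  have GH: "G = fmap n -` H \<inter> space (joint_space K S)"
    using Gc fmap_space[of n] unfolding G0 H_def by (auto simp: lam_eq)
  have Hc: "\<forall>y\<in>H. lamY A C n y < c" by (auto simp: H_def)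
  have mX: "measure (joint_law K P0 P1 X) G = measure (PiM {1..K} (\<lambda>k. if k \<in> X then m1 k n else m0 k n)) H" for X
  proof -
    have "measure (distr (joint_law K P0 P1 X) (Yn n) (fmap n)) H = measure (joint_law K P0 P1 X) (fmap n -` H \<inter> space (joint_law K P0 P1 X))"
      by (rule measure_distr[OF fmap_meas_jl Hs])
    then show ?thesis by (simp add: distr_jl GH space_jl)
  qed
  have pX: "prob_space (PiM {1..K} (\<lambda>k. if k \<in> X then m1 k n else m0 k n))" for X
    by (rule prob_space_PiM) (auto simp: m_facts)
  have e: "emeasure (PiM {1..K} (\<lambda>k. if k \<in> A then m1 k n else m0 k n)) H \<le>
         ennreal (exp c) * emeasure (PiM {1..K} (\<lambda>k. if k \<in> C then m1 k n else m0 k n)) H"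
    by (rule chgY[OF Hs Hc])
  have eX: "emeasure (PiM {1..K} (\<lambda>k. if k \<in> X then m1 k n else m0 k n)) H =
     ennreal (measure (PiM {1..K} (\<lambda>k. if k \<in> X then m1 k n else m0 k n)) H)" for X
    by (rule finite_measure.emeasure_eq_measure[OF prob_space.finite_measure[OF pX]])
  from e have "ennreal (measure (PiM {1..K} (\<lambda>k. if k \<in> A then m1 k n else m0 k n)) H) \<le>
       ennreal (exp c) * ennreal (measure (PiM {1..K} (\<lambda>k. if k \<in> C then m1 k n else m0 k n)) H)"
    by (simp only: eX)
  also have "\<dots> = ennreal (exp c * measure (PiM {1..K} (\<lambda>k. if k \<in> C then m1 k n else m0 k n)) H)"
    by (rule ennreal_mult[symmetric]) auto
  finally have "measure (PiM {1..K} (\<lambda>k. if k \<in> A then m1 k n else m0 k n)) H \<le>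
       exp c * measure (PiM {1..K} (\<lambda>k. if k \<in> C then m1 k n else m0 k n)) H"
    by (simp add: ennreal_le_iff)
  then show ?thesis by (simp add: mX)
qed

lemma rate_jl:
  fixes I J :: "nat \<Rightarrow> real"
  assumes AK: "A \<subseteq> {1..K}" and CK: "C \<subseteq> {1..K}"
    and rate1: "\<And>k. k \<in> {1..K} \<Longrightarrow> AE x in P1 k.
                  limsup (\<lambda>n. ereal (llr (P0 k) (P1 k) (S k) n x / real n)) \<le> ereal (I k)"
    and rate0: "\<And>k. k \<in> {1..K} \<Longrightarrow> AE x in P0 k.
                  limsup (\<lambda>n. ereal (- llr (P0 k) (P1 k) (S k) n x / real n)) \<le> ereal (J k)"
  shows "AE \<omega> in joint_law K P0 P1 A. \<forall>\<eta>>0. \<exists>n0. \<forall>n\<ge>n0. lam A C n \<omega> \<le> (IAC I J A C + \<eta>) * real n"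
proof -
  let ?l = "\<lambda>k n x. llr (P0 k) (P1 k) (S k) n x"
  let ?P = "\<lambda>k x. (k \<in> A \<longrightarrow> limsup (\<lambda>n. ereal (?l k n x / real n)) \<le> ereal (I k)) \<and>
                 (k \<notin> A \<longrightarrow> limsup (\<lambda>n. ereal (- ?l k n x / real n)) \<le> ereal (J k))"
  have comp: "AE \<omega> in joint_law K P0 P1 A. \<forall>k\<in>{1..K}. ?P k (\<omega> k)"
  proof (rule AE_finite_allI)
    fix k assume k: "k \<in> {1..K}"
    have "AE x in (if k \<in> A then P1 k else P0 k). ?P k x"
      using rate1[OF k] rate0[OF k] by (cases "k \<in> A") auto
    then show "AE \<omega> in joint_law K P0 P1 A. ?P k (\<omega> k)"
      unfolding joint_law_def
      by (intro AE_PiM_component[where P="?P k"] k) (use laws in auto)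
  qed simp
  define b where "b k = (if k \<in> A - C then I k else if k \<in> C - A then J k else 0)" for k
  have sumb: "(\<Sum>k\<in>{1..K}. b k) = IAC I J A C"
  proof -
    have "(\<Sum>k\<in>{1..K}. b k) = (\<Sum>k\<in>{1..K}. (if k \<in> A - C then I k else 0) + (if k \<in> C - A then J k else 0))"
      by (intro sum.cong) (auto simp: b_def)
    also have "\<dots> = sum I ({1..K} \<inter> (A - C)) + sum J ({1..K} \<inter> (C - A))"
      by (simp add: sum.distrib sum.inter_restrict)
    also have "{1..K} \<inter> (A - C) = A - C" using AK by auto
    also have "{1..K} \<inter> (C - A) = C - A" using CK by auto
    finally show ?thesis by (simp add: IAC_def)
  qed
  show ?thesis
    using comp
  proof eventually_elim
    case (elim \<omega>)
    define x where "x k n = (if k \<in> A then ?l k n (\<omega> k) else 0) - (if k \<in> C then ?l k n (\<omega> k) else 0)" for k n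
    have "\<forall>\<eta>>0. \<exists>n0. \<forall>n\<ge>n0. (\<Sum>k\<in>{1..K}. x k n) \<le> ((\<Sum>k\<in>{1..K}. b k) + \<eta>) * real n"
    proof (rule DL)
      fix k assume k: "k \<in> {1..K}"
      show "limsup (\<lambda>n. ereal (x k n / real n)) \<le> ereal (b k)"
      proof (cases "k \<in> A"; cases "k \<in> C")
        assume "k \<in> A" "k \<in> C"
        then show ?thesis by (simp add: x_def b_def Limsup_const)
      next
        assume "k \<in> A" "k \<notin> C"
        then show ?thesis using elim k by (simp add: x_def b_def)
      next
        assume "k \<notin> A" "k \<in> C"
        then show ?thesis using elim k by (simp add: x_def b_def)
      next
        assume "k \<notin> A" "k \<notin> C"
        then show ?thesis by (simp add: x_def b_def Limsup_const)
      qed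
    qed simp
    then show ?case unfolding sumb by (simp add: lam_def x_def)
  qed
qed

end

lemma proc_sets:
  assumes P: "is_procedure K S T D" and k: "k \<in> {1..K}"
    and mono: "\<And>n. sets (filt K S n) \<subseteq> sets (filt K S (Suc n))"
    and sp: "\<And>n. space (filt K S n) = space (joint_space K S)"
  shows "{\<omega>\<in>space (joint_space K S). T k \<omega> = enat n} \<in> sets (filt K S n)"
    "{\<omega>\<in>space (joint_space K S). D k \<omega> \<and> T k \<omega> = enat n} \<in> sets (filt K S n)"
    "{\<omega>\<in>space (joint_space K S). \<not> D k \<omega> \<and> T k \<omega> = enat n} \<in> sets (filt K S n)"
    "{\<omega>\<in>space (joint_space K S). D k \<omega>} \<in> sets (joint_space K S)"
    "\<And>\<omega>. \<omega> \<in> space (joint_space K S) \<Longrightarrow> 1 \<le> T k \<omega>"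
proof -
  have Tle: "\<And>n. {\<omega>\<in>space (joint_space K S). T k \<omega> \<le> enat n} \<in> sets (filt K S n)"
    and DTle: "\<And>n. {\<omega>\<in>space (joint_space K S). D k \<omega> \<and> T k \<omega> \<le> enat n} \<in> sets (filt K S n)"
    using P k unfolding is_procedure_def by auto
  show "{\<omega>\<in>space (joint_space K S). D k \<omega>} \<in> sets (joint_space K S)"
    "\<And>\<omega>. \<omega> \<in> space (joint_space K S) \<Longrightarrow> 1 \<le> T k \<omega>"
    using P k unfolding is_procedure_def by auto
  show T: "{\<omega>\<in>space (joint_space K S). T k \<omega> = enat n} \<in> sets (filt K S n)" for n
  proof (cases n)
    case 0
    have "{\<omega>\<in>space (joint_space K S). T k \<omega> = enat n} = {\<omega>\<in>space (joint_space K S). T k \<omega> \<le> enat 0}"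
      using 0 by (auto simp: zero_enat_def[symmetric])
    then show ?thesis using Tle[of 0] 0 by simp
  next
    case (Suc m)
    have "{\<omega>\<in>space (joint_space K S). T k \<omega> = enat n} =
      {\<omega>\<in>space (joint_space K S). T k \<omega> \<le> enat n} - {\<omega>\<in>space (joint_space K S). T k \<omega> \<le> enat m}"
      using Suc by (auto simp: enat_ile) (metis Suc_leI enat_ile enat_ord_simps(1) le_antisym not_le)
    moreover have "{\<omega>\<in>space (joint_space K S). T k \<omega> \<le> enat m} \<in> sets (filt K S n)"
      using Tle[of m] mono[of m] Suc by auto
    ultimately show ?thesis using Tle[of n] by auto
  qed
  show DT: "{\<omega>\<in>space (joint_space K S). D k \<omega> \<and> T k \<omega> = enat n} \<in> sets (filt K S n)" for n
  proof (cases n)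
    case 0
    have "{\<omega>\<in>space (joint_space K S). D k \<omega> \<and> T k \<omega> = enat n} = {\<omega>\<in>space (joint_space K S). D k \<omega> \<and> T k \<omega> \<le> enat 0}"
      using 0 by (auto simp: zero_enat_def[symmetric])
    then show ?thesis using DTle[of 0] 0 by simp
  next
    case (Suc m)
    have "{\<omega>\<in>space (joint_space K S). D k \<omega> \<and> T k \<omega> = enat n} =
      {\<omega>\<in>space (joint_space K S). D k \<omega> \<and> T k \<omega> \<le> enat n} - {\<omega>\<in>space (joint_space K S). T k \<omega> \<le> enat m}"
      using Suc by (auto simp: enat_ile) (metis Suc_leI enat_ile enat_ord_simps(1) le_antisym not_le)
    moreover have "{\<omega>\<in>space (joint_space K S). T k \<omega> \<le> enat m} \<in> sets (filt K S n)"
      using Tle[of m] mono[of m] Suc by auto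
    ultimately show ?thesis using DTle[of n] by auto
  qed
  show "{\<omega>\<in>space (joint_space K S). \<not> D k \<omega> \<and> T k \<omega> = enat n} \<in> sets (filt K S n)"
  proof -
    have "{\<omega>\<in>space (joint_space K S). \<not> D k \<omega> \<and> T k \<omega> = enat n} =
      {\<omega>\<in>space (joint_space K S). T k \<omega> = enat n} - {\<omega>\<in>space (joint_space K S). D k \<omega> \<and> T k \<omega> = enat n}"
      by auto
    then show ?thesis using T[of n] DT[of n] by auto
  qed
qed

theorem lemma5p1:
  fixes K :: nat and S :: "nat \<Rightarrow> 'x measure"
    and P0 P1 :: "nat \<Rightarrow> (nat \<Rightarrow> 'x) measure"
    and I J :: "nat \<Rightarrow> real" and Cls :: "nat set set" and A :: "nat set" and i j :: nat
  assumes K: "1 \<le> K"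
    and laws: "\<And>k. k \<in> {1..K} \<Longrightarrow> prob_space (P0 k) \<and> prob_space (P1 k) \<and>
                  sets (P0 k) = sets (seqsp (S k)) \<and> sets (P1 k) = sets (seqsp (S k))"
    and mac: "\<And>k n. k \<in> {1..K} \<Longrightarrow>
                  absolutely_continuous (marg (P0 k) (S k) n) (marg (P1 k) (S k) n) \<and>
                  absolutely_continuous (marg (P1 k) (S k) n) (marg (P0 k) (S k) n)"
    and IJpos: "\<And>k. k \<in> {1..K} \<Longrightarrow> 0 < I k \<and> 0 < J k"
    and rate1: "\<And>k. k \<in> {1..K} \<Longrightarrow> AE x in P1 k.
                  limsup (\<lambda>n. ereal (llr (P0 k) (P1 k) (S k) n x / real n)) \<le> ereal (I k)"
    and rate0: "\<And>k. k \<in> {1..K} \<Longrightarrow> AE x in P0 k.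
                  limsup (\<lambda>n. ereal (- llr (P0 k) (P1 k) (S k) n x / real n)) \<le> ereal (J k)"
    and Pi_sub: "Cls \<subseteq> Pow {1..K}"
    and Pi_cover: "\<And>k. k \<in> {1..K} \<Longrightarrow> (\<exists>B\<in>Cls. k \<in> B) \<and> (\<exists>B\<in>Cls. k \<notin> B)"
    and A: "A \<in> Cls" and i: "i \<in> A" and j: "j \<in> {1..K}" "j \<notin> A"
  shows "(\<forall>\<epsilon>>0. \<exists>\<delta>>0. \<forall>\<alpha> \<beta>. 0 < \<alpha> \<and> \<alpha> < \<delta> \<and> 0 < \<beta> \<and> \<beta> < \<delta> \<longrightarrow>
            ennreal ((1 - \<epsilon>) * \<bar>ln \<alpha>\<bar> / Min {IAC I J A C | C. C \<in> Cls \<and> i \<notin> C})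
              \<le> LL K S P0 P1 i A \<alpha> \<beta> Cls)
       \<and> (\<forall>\<epsilon>>0. \<exists>\<delta>>0. \<forall>\<alpha> \<beta>. 0 < \<alpha> \<and> \<alpha> < \<delta> \<and> 0 < \<beta> \<and> \<beta> < \<delta> \<longrightarrow>
            ennreal ((1 - \<epsilon>) * \<bar>ln \<beta>\<bar> / Min {IAC I J A C | C. C \<in> Cls \<and> j \<in> C})
              \<le> LL K S P0 P1 j A \<alpha> \<beta> Cls)"
proof -
  interpret st: setting K S P0 P1 unfolding setting_def using laws mac by blast
  have AK: "A \<subseteq> {1..K}" using Pi_sub A by auto
  have finK: "finite (Pow {1..K})" by simp
  have finCls: "finite Cls" using Pi_sub finK by (rule finite_subset)
  have iK: "i \<in> {1..K}" using AK i by auto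
  have spPA: "\<And>X. space (joint_law K P0 P1 X) = space (joint_space K S)" by (rule st.space_jl)
  have posI: "0 < IAC I J A C0" if C0: "C0 \<subseteq> {1..K}" and ex: "(A - C0) \<union> (C0 - A) \<noteq> {}" for C0
  proof -
    have f1: "finite (A - C0)" and f2: "finite (C0 - A)" using AK C0 by (auto intro: finite_subset)
    have p1: "\<And>k. k \<in> A - C0 \<Longrightarrow> 0 < I k" and p2: "\<And>k. k \<in> C0 - A \<Longrightarrow> 0 < J k"
      using IJpos AK C0 by auto
    show ?thesis
    proof (cases "A - C0 = {}")
      case True
      then have "C0 - A \<noteq> {}" using ex by auto
      then have "0 < sum J (C0 - A)" by (intro sum_pos f2 p2)
      moreover have "0 \<le> sum I (A - C0)" using p1 by (intro sum_nonneg) (auto intro: less_imp_le)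
      ultimately show ?thesis by (simp add: IAC_def)
    next
      case False
      then have "0 < sum I (A - C0)" by (intro sum_pos f1 p1)
      moreover have "0 \<le> sum J (C0 - A)" using p2 by (intro sum_nonneg) (auto intro: less_imp_le)
      ultimately show ?thesis by (simp add: IAC_def)
    qed
  qed
  have key: "\<exists>\<delta>>0. \<forall>a b T E. 0 < a \<and> a < \<delta> \<and> 0 < b \<and> b < \<delta> \<and>
     (\<forall>\<omega>\<in>space (joint_law K P0 P1 A). 1 \<le> T \<omega>) \<and>
     (\<forall>n. {\<omega>\<in>space (joint_law K P0 P1 A). T \<omega> = enat n} \<in> sets (filt K S n)) \<and>
     (\<forall>n. {\<omega>\<in>space (joint_law K P0 P1 A). E \<omega> \<and> T \<omega> = enat n} \<in> sets (filt K S n)) \<and>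
     {\<omega>\<in>space (joint_law K P0 P1 A). E \<omega>} \<in> sets (joint_law K P0 P1 A) \<and>
     measure (joint_law K P0 P1 A) {\<omega>\<in>space (joint_law K P0 P1 A). \<not> E \<omega>} \<le> a \<and>
     measure (joint_law K P0 P1 C0) {\<omega>\<in>space (joint_law K P0 P1 C0). E \<omega>} \<le> b \<longrightarrow>
     ennreal ((1 - \<epsilon>) * \<bar>ln b\<bar> / IAC I J A C0) \<le> (\<integral>\<^sup>+\<omega>. ennreal_of_enat (T \<omega>) \<partial>joint_law K P0 P1 A)"
    if C0: "C0 \<in> Cls" and Ip: "0 < IAC I J A C0" and eps: "0 < \<epsilon>" for C0 \<epsilon>
  proof (rule core[where F="filt K S" and L="setting.lam K S P0 P1 A C0"])
    have C0K: "C0 \<subseteq> {1..K}" using C0 Pi_sub by auto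
    show "prob_space (joint_law K P0 P1 A)" by (rule st.prob_jl)
    show "prob_space (joint_law K P0 P1 C0)" by (rule st.prob_jl)
    show "sets (joint_law K P0 P1 C0) = sets (joint_law K P0 P1 A)"
      by (simp add: st.sets_jl)
    show "0 < IAC I J A C0" by (rule Ip)
    show "\<And>n. setting.lam K S P0 P1 A C0 n \<in> borel_measurable (joint_law K P0 P1 A)"
      by (rule st.lam_meas)
    show "AE \<omega> in joint_law K P0 P1 A. \<forall>\<eta>>0. \<exists>n0. \<forall>n\<ge>n0. setting.lam K S P0 P1 A C0 n \<omega> \<le> (IAC I J A C0 + \<eta>) * real n"
      by (rule st.rate_jl[OF AK C0K rate1 rate0])
    show "\<And>n. space (filt K S n) = space (joint_law K P0 P1 A)"
      by (simp add: st.filt_space spPA)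
    show "\<And>n. sets (filt K S n) \<subseteq> sets (joint_law K P0 P1 A)"
      using st.filt_sub by (simp add: st.sets_jl)
    show "\<And>n c. {\<omega>\<in>space (joint_law K P0 P1 A). setting.lam K S P0 P1 A C0 n \<omega> < c} \<in> sets (filt K S n)"
      unfolding spPA by (rule st.lam_F)
    show "\<And>n c G. G \<in> sets (filt K S n) \<Longrightarrow> \<forall>\<omega>\<in>G. setting.lam K S P0 P1 A C0 n \<omega> < c \<Longrightarrow>
       measure (joint_law K P0 P1 A) G \<le> exp c * measure (joint_law K P0 P1 C0) G"
      by (rule st.chg)
    show "0 < \<epsilon>" by (rule eps)
  qed
  have Dsets: "\<And>T D X k. is_procedure K S T D \<Longrightarrow> k \<in> {1..K} \<Longrightarrow>
      {\<omega>\<in>space (joint_law K P0 P1 X). D k \<omega>} \<in> sets (joint_law K P0 P1 X)"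
  proof -
    fix T D X k assume P: "is_procedure K S T D" and k: "k \<in> {1..K}"
    have "{\<omega>\<in>space (joint_space K S). D k \<omega>} \<in> sets (joint_space K S)"
      by (rule proc_sets(4)[OF P k st.filt_mono st.filt_space])
    then show "{\<omega>\<in>space (joint_law K P0 P1 X). D k \<omega>} \<in> sets (joint_law K P0 P1 X)"
      by (simp add: st.sets_jl spPA)
  qed
  have UNs: "{\<omega>\<in>space (joint_law K P0 P1 X). \<exists>k\<in>Y. D k \<omega>} \<in> sets (joint_law K P0 P1 X)"
    if "is_procedure K S T D" "Y \<subseteq> {1..K}" for T D X Y
  proof -
    have "{\<omega>\<in>space (joint_law K P0 P1 X). \<exists>k\<in>Y. D k \<omega>} = (\<Union>k\<in>Y. {\<omega>\<in>space (joint_law K P0 P1 X). D k \<omega>})"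
      by auto
    moreover have "finite Y" using that by (auto intro: finite_subset)
    then have "(\<Union>k\<in>Y. {\<omega>\<in>space (joint_law K P0 P1 X). D k \<omega>}) \<in> sets (joint_law K P0 P1 X)"
      by (rule sets.finite_UN) (use Dsets[OF that(1)] that(2) in auto)
    ultimately show ?thesis by simp
  qed
  have UNs2: "{\<omega>\<in>space (joint_law K P0 P1 X). \<exists>k\<in>Y. \<not> D k \<omega>} \<in> sets (joint_law K P0 P1 X)"
    if "is_procedure K S T D" "Y \<subseteq> {1..K}" for T D X Y
  proof -
    have "{\<omega>\<in>space (joint_law K P0 P1 X). \<exists>k\<in>Y. \<not> D k \<omega>} = (\<Union>k\<in>Y. space (joint_law K P0 P1 X) - {\<omega>\<in>space (joint_law K P0 P1 X). D k \<omega>})"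
      by auto
    moreover have "finite Y" using that by (auto intro: finite_subset)
    then have "(\<Union>k\<in>Y. space (joint_law K P0 P1 X) - {\<omega>\<in>space (joint_law K P0 P1 X). D k \<omega>}) \<in> sets (joint_law K P0 P1 X)"
      by (rule sets.finite_UN) (use Dsets[OF that(1)] that(2) in auto)
    ultimately show ?thesis by simp
  qed
  have pr: "\<And>X. prob_space (joint_law K P0 P1 X)" by (rule st.prob_jl)
  show ?thesis
  proof (intro conjI allI impI)
    fix \<epsilon> :: real assume eps: "0 < \<epsilon>"
    define CS where "CS = {IAC I J A C | C. C \<in> Cls \<and> i \<notin> C}"
    have finCS: "finite CS" unfolding CS_def using finCls by simp
    obtain B where B: "B \<in> Cls" "i \<notin> B" using Pi_cover[OF iK] by blast
    have neCS: "CS \<noteq> {}" unfolding CS_def using B by blast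
    obtain C0 where C0: "C0 \<in> Cls" "i \<notin> C0" "IAC I J A C0 = Min CS"
      using Min_in[OF finCS neCS] unfolding CS_def by auto
    have Ip: "0 < IAC I J A C0" using C0 Pi_sub i by (intro posI) auto
    obtain \<delta> where dpos: "\<delta> > 0" and D: "\<forall>a b T E. 0 < a \<and> a < \<delta> \<and> 0 < b \<and> b < \<delta> \<and>
     (\<forall>\<omega>\<in>space (joint_law K P0 P1 A). 1 \<le> T \<omega>) \<and>
     (\<forall>n. {\<omega>\<in>space (joint_law K P0 P1 A). T \<omega> = enat n} \<in> sets (filt K S n)) \<and>
     (\<forall>n. {\<omega>\<in>space (joint_law K P0 P1 A). E \<omega> \<and> T \<omega> = enat n} \<in> sets (filt K S n)) \<and>
     {\<omega>\<in>space (joint_law K P0 P1 A). E \<omega>} \<in> sets (joint_law K P0 P1 A) \<and>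
     measure (joint_law K P0 P1 A) {\<omega>\<in>space (joint_law K P0 P1 A). \<not> E \<omega>} \<le> a \<and>
     measure (joint_law K P0 P1 C0) {\<omega>\<in>space (joint_law K P0 P1 C0). E \<omega>} \<le> b \<longrightarrow>
     ennreal ((1 - \<epsilon>) * \<bar>ln b\<bar> / IAC I J A C0) \<le> (\<integral>\<^sup>+\<omega>. ennreal_of_enat (T \<omega>) \<partial>joint_law K P0 P1 A)"
      using key[OF C0(1) Ip eps] by blast
    show "\<exists>\<delta>>0. \<forall>\<alpha> \<beta>. 0 < \<alpha> \<and> \<alpha> < \<delta> \<and> 0 < \<beta> \<and> \<beta> < \<delta> \<longrightarrow>
            ennreal ((1 - \<epsilon>) * \<bar>ln \<alpha>\<bar> / Min {IAC I J A C | C. C \<in> Cls \<and> i \<notin> C})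
              \<le> LL K S P0 P1 i A \<alpha> \<beta> Cls"
    proof (intro exI[of _ \<delta>] conjI allI impI dpos)
      fix \<alpha> \<beta> :: real assume ab: "0 < \<alpha> \<and> \<alpha> < \<delta> \<and> 0 < \<beta> \<and> \<beta> < \<delta>"
      show "ennreal ((1 - \<epsilon>) * \<bar>ln \<alpha>\<bar> / Min {IAC I J A C | C. C \<in> Cls \<and> i \<notin> C}) \<le> LL K S P0 P1 i A \<alpha> \<beta> Cls"
        unfolding LL_def
      proof (rule INF_greatest)
        fix TD assume TD: "TD \<in> Delta K S P0 P1 \<alpha> \<beta> Cls"
        obtain T Dd where TDe: "TD = (T, Dd)" by (cases TD)
        have P: "is_procedure K S T Dd" and F1: "FWE1 K P0 P1 C0 Dd \<le> \<alpha>" and F2: "FWE2 K P0 P1 A Dd \<le> \<beta>"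
          using TD C0(1) A unfolding TDe Delta_def by auto
        note ps = proc_sets[OF P iK st.filt_mono st.filt_space]
        have m1: "measure (joint_law K P0 P1 A) {\<omega>\<in>space (joint_law K P0 P1 A). \<not> Dd i \<omega>} \<le> \<beta>"
        proof -
          have "measure (joint_law K P0 P1 A) {\<omega>\<in>space (joint_law K P0 P1 A). \<not> Dd i \<omega>}
              \<le> FWE2 K P0 P1 A Dd"
            unfolding FWE2_def
            by (rule finite_measure.finite_measure_mono[OF prob_space.finite_measure[OF pr]])
               (use i UNs2[OF P AK] in auto)
          then show ?thesis using F2 by linarith
        qed
        have m2: "measure (joint_law K P0 P1 C0) {\<omega>\<in>space (joint_law K P0 P1 C0). Dd i \<omega>} \<le> \<alpha>"
        proof -
          have "measure (joint_law K P0 P1 C0) {\<omega>\<in>space (joint_law K P0 P1 C0). Dd i \<omega>}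
              \<le> FWE1 K P0 P1 C0 Dd"
            unfolding FWE1_def
            by (rule finite_measure.finite_measure_mono[OF prob_space.finite_measure[OF pr]])
               (use iK C0(2) UNs[OF P, of "{1..K} - C0"] in auto)
          then show ?thesis using F1 by linarith
        qed
        have "ennreal ((1 - \<epsilon>) * \<bar>ln \<alpha>\<bar> / IAC I J A C0) \<le> (\<integral>\<^sup>+\<omega>. ennreal_of_enat (T i \<omega>) \<partial>joint_law K P0 P1 A)"
          using D[rule_format, of \<beta> \<alpha> "T i" "Dd i"] ab m1 m2 ps Dsets[OF P iK] by (simp add: spPA)
        then show "ennreal ((1 - \<epsilon>) * \<bar>ln \<alpha>\<bar> / Min {IAC I J A C | C. C \<in> Cls \<and> i \<notin> C})
            \<le> (\<integral>\<^sup>+\<omega>. ennreal_of_enat (fst TD i \<omega>) \<partial>joint_law K P0 P1 A)"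
          using C0(3) by (simp add: TDe CS_def)
      qed
    qed
  next
    fix \<epsilon> :: real assume eps: "0 < \<epsilon>"
    define CS where "CS = {IAC I J A C | C. C \<in> Cls \<and> j \<in> C}"
    have finCS: "finite CS" unfolding CS_def using finCls by simp
    obtain B where B: "B \<in> Cls" "j \<in> B" using Pi_cover[OF j(1)] by blast
    have neCS: "CS \<noteq> {}" unfolding CS_def using B by blast
    obtain C0 where C0: "C0 \<in> Cls" "j \<in> C0" "IAC I J A C0 = Min CS"
      using Min_in[OF finCS neCS] unfolding CS_def by auto
    have Ip: "0 < IAC I J A C0" using C0 Pi_sub j by (intro posI) auto
    obtain \<delta> where dpos: "\<delta> > 0" and D: "\<forall>a b T E. 0 < a \<and> a < \<delta> \<and> 0 < b \<and> b < \<delta> \<and>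
     (\<forall>\<omega>\<in>space (joint_law K P0 P1 A). 1 \<le> T \<omega>) \<and>
     (\<forall>n. {\<omega>\<in>space (joint_law K P0 P1 A). T \<omega> = enat n} \<in> sets (filt K S n)) \<and>
     (\<forall>n. {\<omega>\<in>space (joint_law K P0 P1 A). E \<omega> \<and> T \<omega> = enat n} \<in> sets (filt K S n)) \<and>
     {\<omega>\<in>space (joint_law K P0 P1 A). E \<omega>} \<in> sets (joint_law K P0 P1 A) \<and>
     measure (joint_law K P0 P1 A) {\<omega>\<in>space (joint_law K P0 P1 A). \<not> E \<omega>} \<le> a \<and>
     measure (joint_law K P0 P1 C0) {\<omega>\<in>space (joint_law K P0 P1 C0). E \<omega>} \<le> b \<longrightarrow>
     ennreal ((1 - \<epsilon>) * \<bar>ln b\<bar> / IAC I J A C0) \<le> (\<integral>\<^sup>+\<omega>. ennreal_of_enat (T \<omega>) \<partial>joint_law K P0 P1 A)"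
      using key[OF C0(1) Ip eps] by blast
    show "\<exists>\<delta>>0. \<forall>\<alpha> \<beta>. 0 < \<alpha> \<and> \<alpha> < \<delta> \<and> 0 < \<beta> \<and> \<beta> < \<delta> \<longrightarrow>
            ennreal ((1 - \<epsilon>) * \<bar>ln \<beta>\<bar> / Min {IAC I J A C | C. C \<in> Cls \<and> j \<in> C})
              \<le> LL K S P0 P1 j A \<alpha> \<beta> Cls"
    proof (intro exI[of _ \<delta>] conjI allI impI dpos)
      fix \<alpha> \<beta> :: real assume ab: "0 < \<alpha> \<and> \<alpha> < \<delta> \<and> 0 < \<beta> \<and> \<beta> < \<delta>"
      show "ennreal ((1 - \<epsilon>) * \<bar>ln \<beta>\<bar> / Min {IAC I J A C | C. C \<in> Cls \<and> j \<in> C}) \<le> LL K S P0 P1 j A \<alpha> \<beta> Cls"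
        unfolding LL_def
      proof (rule INF_greatest)
        fix TD assume TD: "TD \<in> Delta K S P0 P1 \<alpha> \<beta> Cls"
        obtain T Dd where TDe: "TD = (T, Dd)" by (cases TD)
        have P: "is_procedure K S T Dd" and F1: "FWE1 K P0 P1 A Dd \<le> \<alpha>" and F2: "FWE2 K P0 P1 C0 Dd \<le> \<beta>"
          using TD C0(1) A unfolding TDe Delta_def by auto
        note ps = proc_sets[OF P j(1) st.filt_mono st.filt_space]
        have m1: "measure (joint_law K P0 P1 A) {\<omega>\<in>space (joint_law K P0 P1 A). Dd j \<omega>} \<le> \<alpha>"
        proof -
          have "measure (joint_law K P0 P1 A) {\<omega>\<in>space (joint_law K P0 P1 A). Dd j \<omega>}
              \<le> FWE1 K P0 P1 A Dd"
            unfolding FWE1_def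
            by (rule finite_measure.finite_measure_mono[OF prob_space.finite_measure[OF pr]])
               (use j UNs[OF P, of "{1..K} - A"] in auto)
          then show ?thesis using F1 by linarith
        qed
        have m2: "measure (joint_law K P0 P1 C0) {\<omega>\<in>space (joint_law K P0 P1 C0). \<not> Dd j \<omega>} \<le> \<beta>"
        proof -
          have C0K: "C0 \<subseteq> {1..K}" using C0(1) Pi_sub by auto
          have "measure (joint_law K P0 P1 C0) {\<omega>\<in>space (joint_law K P0 P1 C0). \<not> Dd j \<omega>}
              \<le> FWE2 K P0 P1 C0 Dd"
            unfolding FWE2_def
            by (rule finite_measure.finite_measure_mono[OF prob_space.finite_measure[OF pr]])
               (use C0(2) UNs2[OF P C0K] in auto)
          then show ?thesis using F2 by linarith
        qed
        have "ennreal ((1 - \<epsilon>) * \<bar>ln \<beta>\<bar> / IAC I J A C0) \<le> (\<integral>\<^sup>+\<omega>. ennreal_of_enat (T j \<omega>) \<partial>joint_law K P0 P1 A)"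
        proof -
          have "space (joint_law K P0 P1 A) - {\<omega>\<in>space (joint_law K P0 P1 A). Dd j \<omega>} \<in> sets (joint_law K P0 P1 A)"
            by (rule sets.compl_sets[OF Dsets[OF P j(1)]])
          moreover have "space (joint_law K P0 P1 A) - {\<omega>\<in>space (joint_law K P0 P1 A). Dd j \<omega>} =
             {\<omega>\<in>space (joint_law K P0 P1 A). \<not> Dd j \<omega>}" by auto
          ultimately have nDs: "{\<omega>\<in>space (joint_law K P0 P1 A). \<not> Dd j \<omega>} \<in> sets (joint_law K P0 P1 A)" by simp
          show ?thesis
            using D[rule_format, of \<alpha> \<beta> "T j" "\<lambda>\<omega>. \<not> Dd j \<omega>"] ab m1 m2 ps nDs
            by (simp add: spPA)
        qed
        then show "ennreal ((1 - \<epsilon>) * \<bar>ln \<beta>\<bar> / Min {IAC I J A C | C. C \<in> Cls \<and> j \<in> C})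
            \<le> (\<integral>\<^sup>+\<omega>. ennreal_of_enat (fst TD j \<omega>) \<partial>joint_law K P0 P1 A)"
          using C0(3) by (simp add: TDe CS_def)
      qed
    qed
  qed
qed

end
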